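(* Let $\omega\in\mathbb C$ with $|\omega|=1$ and let $m\ge1$ be an integer. Then $L_{m,\omega}=\frac im\big(\mathrm{Log}(\omega\mathbf1-L^m)-\mathrm{Log}(\bar\omega\mathbf1-L^{*m})\big)$ is a time operator of $N$ with dense CCR-domain $\mathrm D(NL_{m,\omega})\cap\mathrm D(L_{m,\omega}N)$, i.e. $[N,L_{m,\omega}]=-i\mathbf1$ on this domain.
   Context: $\ell^2=\ell^2(\mathbb N)$, $\mathbb N=\{0,1,\dots\}$, basis $(\xi_n)$; $N\xi_n=n\xi_n$ (self-adjoint, maximal domain); $L$ left shift ($L\xi_n=\xi_{n-1}$, $L\xi_0=0$), $L^*$ right shift. For a linear operator $A$ and $\omega\ne0$: $\mathrm D(\mathrm{Log}(\omega\mathbf1-A))=\{\varphi\in\bigcap_{k\ge0}\mathrm D(A^k):\lim_K\sum_{k=1}^K\frac1k(\omega^{-1}A)^k\varphi\text{ exists}\}$ and $\mathrm{Log}(\omega\mathbf1-A)\varphi=\log(\omega)\varphi-\sum_{k\ge1}\frac1k(\omega^{-1}A)^k\varphi$, with $\log\omega$ a fixed (e.g. principal) logarithm. $L_{m,\omega}$ is defined on the intersection of the two domains. A time operator of a self-adjoint $H$ is a symmetric operator $T$ with $[H,T]=-i\mathbf1$ on some nonzero subspace (CCR-domain) of $\mathrm D(HT)\cap\mathrm D(TH)$. *)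

theory Defs
  imports "HOL-Analysis.Analysis"
begin

text \<open>The Hilbert space l2(N) is modelled as the set of square-summable
  sequences nat => complex; operators are (partial) maps on sequences together
  with an explicit domain set.\<close>

definition l2 :: "(nat \<Rightarrow> complex) set" where
  "l2 = {f. summable (\<lambda>n. (cmod (f n))^2)}"

definition l2norm :: "(nat \<Rightarrow> complex) \<Rightarrow> real" where
  "l2norm f = sqrt (\<Sum>n. (cmod (f n))^2)"

definition l2inner :: "(nat \<Rightarrow> complex) \<Rightarrow> (nat \<Rightarrow> complex) \<Rightarrow> complex" where
  "l2inner f g = (\<Sum>n. cnj (f n) * g n)"

definition l2_dense :: "(nat \<Rightarrow> complex) set \<Rightarrow> bool" where
  "l2_dense D \<longleftrightarrow> D \<subseteq> l2 \<and>
     (\<forall>f\<in>l2. \<forall>e>0. \<exists>g\<in>D. l2norm (\<lambda>n. f n - g n) < e)"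

definition numop :: "(nat \<Rightarrow> complex) \<Rightarrow> (nat \<Rightarrow> complex)" where
  "numop \<phi> = (\<lambda>n. of_nat n * \<phi> n)"

definition numop_dom :: "(nat \<Rightarrow> complex) set" where
  "numop_dom = {\<phi>\<in>l2. numop \<phi> \<in> l2}"

text \<open>Left shift L (L xi_n = xi_(n-1), L xi_0 = 0) and right shift L*.\<close>
definition lshift :: "(nat \<Rightarrow> complex) \<Rightarrow> (nat \<Rightarrow> complex)" where
  "lshift \<phi> = (\<lambda>n. \<phi> (Suc n))"

definition rshift :: "(nat \<Rightarrow> complex) \<Rightarrow> (nat \<Rightarrow> complex)" where
  "rshift \<phi> = (\<lambda>n. if n = 0 then 0 else \<phi> (n - 1))"

text \<open>Log(omega 1 - A) for an operator A with domain D.\<close>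
definition log_series_conv ::
  "complex \<Rightarrow> ((nat \<Rightarrow> complex) \<Rightarrow> (nat \<Rightarrow> complex)) \<Rightarrow> (nat \<Rightarrow> complex) \<Rightarrow> (nat \<Rightarrow> complex) \<Rightarrow> bool" where
  "log_series_conv \<omega> A \<phi> \<psi> \<longleftrightarrow> \<psi> \<in> l2 \<and>
     (\<lambda>K. l2norm (\<lambda>n. (\<Sum>k=1..K. (1 / of_nat k) * (inverse \<omega>)^k * (A ^^ k) \<phi> n) - \<psi> n))
       \<longlonglongrightarrow> 0"

definition Log_dom ::
  "complex \<Rightarrow> (nat \<Rightarrow> complex) set \<Rightarrow> ((nat \<Rightarrow> complex) \<Rightarrow> (nat \<Rightarrow> complex)) \<Rightarrow> (nat \<Rightarrow> complex) set" where
  "Log_dom \<omega> D A = {\<phi>. (\<forall>k. (A ^^ k) \<phi> \<in> D) \<and> (\<exists>\<psi>. log_series_conv \<omega> A \<phi> \<psi>)}"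

definition Log_op ::
  "complex \<Rightarrow> ((nat \<Rightarrow> complex) \<Rightarrow> (nat \<Rightarrow> complex)) \<Rightarrow> (nat \<Rightarrow> complex) \<Rightarrow> (nat \<Rightarrow> complex)" where
  "Log_op \<omega> A \<phi> = (\<lambda>n. Ln \<omega> * \<phi> n - (THE \<psi>. log_series_conv \<omega> A \<phi> \<psi>) n)"

text \<open>L_{m,omega} = (i/m)(Log(omega 1 - L^m) - Log(cnj omega 1 - L*^m)),
  on the intersection of the two domains (L, L* are bounded, domain l2).\<close>
definition Lmw_dom :: "nat \<Rightarrow> complex \<Rightarrow> (nat \<Rightarrow> complex) set" where
  "Lmw_dom m \<omega> = Log_dom \<omega> l2 (lshift ^^ m) \<inter> Log_dom (cnj \<omega>) l2 (rshift ^^ m)"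

definition Lmw :: "nat \<Rightarrow> complex \<Rightarrow> (nat \<Rightarrow> complex) \<Rightarrow> (nat \<Rightarrow> complex)" where
  "Lmw m \<omega> \<phi> = (\<lambda>n. (\<i> / of_nat m) *
      (Log_op \<omega> (lshift ^^ m) \<phi> n - Log_op (cnj \<omega>) (rshift ^^ m) \<phi> n))"

definition symmetric_op ::
  "(nat \<Rightarrow> complex) set \<Rightarrow> ((nat \<Rightarrow> complex) \<Rightarrow> (nat \<Rightarrow> complex)) \<Rightarrow> bool" where
  "symmetric_op D T \<longleftrightarrow> l2_dense D \<and> (\<forall>\<phi>\<in>D. T \<phi> \<in> l2) \<and>
     (\<forall>\<phi>\<in>D. \<forall>\<psi>\<in>D. l2inner (T \<phi>) \<psi> = l2inner \<phi> (T \<psi>))"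

definition prod_dom ::
  "(nat \<Rightarrow> complex) set \<Rightarrow> (nat \<Rightarrow> complex) set \<Rightarrow> ((nat \<Rightarrow> complex) \<Rightarrow> (nat \<Rightarrow> complex)) \<Rightarrow> (nat \<Rightarrow> complex) set" where
  "prod_dom DA DB B = {\<phi>\<in>DB. B \<phi> \<in> DA}"

definition is_subspace :: "(nat \<Rightarrow> complex) set \<Rightarrow> bool" where
  "is_subspace S \<longleftrightarrow> (\<lambda>n. 0) \<in> S \<and> (\<forall>f\<in>S. \<forall>g\<in>S. (\<lambda>n. f n + g n) \<in> S) \<and>
     (\<forall>c. \<forall>f\<in>S. (\<lambda>n. c * f n) \<in> S)"

definition time_operator_with ::
  "(nat \<Rightarrow> complex) set \<Rightarrow> ((nat \<Rightarrow> complex) \<Rightarrow> (nat \<Rightarrow> complex)) \<Rightarrow>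
   (nat \<Rightarrow> complex) set \<Rightarrow> ((nat \<Rightarrow> complex) \<Rightarrow> (nat \<Rightarrow> complex)) \<Rightarrow>
   (nat \<Rightarrow> complex) set \<Rightarrow> bool" where
  "time_operator_with DH H DT T C \<longleftrightarrow> symmetric_op DT T \<and>
     is_subspace C \<and> (\<exists>\<phi>\<in>C. \<phi> \<noteq> (\<lambda>n. 0)) \<and>
     C \<subseteq> prod_dom DH DT T \<inter> prod_dom DT DH H \<and>
     (\<forall>\<phi>\<in>C. (\<lambda>n. H (T \<phi>) n - T (H \<phi>) n) = (\<lambda>n. - \<i> * \<phi> n))"

end

theory Submission
  imports Defs
begin

lemma l2_add: assumes "f \<in> l2" "g \<in> l2" shows "(\<lambda>n. f n + g n) \<in> l2"
proof -
  have "(cmod (f n + g n))^2 \<le> 2 * (cmod (f n))^2 + 2 * (cmod (g n))^2" for n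
  proof -
    have "cmod (f n + g n) \<le> cmod (f n) + cmod (g n)" by (rule norm_triangle_ineq)
    hence "(cmod (f n + g n))^2 \<le> (cmod (f n) + cmod (g n))^2" by (simp add: power_mono)
    also have "\<dots> \<le> 2 * (cmod (f n))^2 + 2 * (cmod (g n))^2"
      using zero_le_power2[of "cmod (f n) - cmod (g n)"] by (simp add: power2_eq_square algebra_simps)
    finally show ?thesis .
  qed
  moreover have "summable (\<lambda>n. 2 * (cmod (f n))^2 + 2 * (cmod (g n))^2)"
    using assms by (intro summable_add summable_mult) (auto simp: l2_def)
  ultimately show ?thesis unfolding l2_def
    by (auto intro: summable_comparison_test[where g="\<lambda>n. 2 * (cmod (f n))^2 + 2 * (cmod (g n))^2"])
qed

lemma l2_scale: "f \<in> l2 \<Longrightarrow> (\<lambda>n. c * f n) \<in> l2"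
  by (simp add: l2_def norm_mult power_mult_distrib summable_mult)

lemma l2_zero: "(\<lambda>n. 0) \<in> l2"
  by (simp add: l2_def)

lemma l2_diff: assumes "f \<in> l2" "g \<in> l2" shows "(\<lambda>n. f n - g n) \<in> l2"
  using l2_add[OF assms(1) l2_scale[OF assms(2), of "-1"]] by simp

lemma l2_sum: "(\<And>k. k \<in> S \<Longrightarrow> F k \<in> l2) \<Longrightarrow> (\<lambda>n. \<Sum>k\<in>S. F k n) \<in> l2"
proof (induction S rule: infinite_finite_induct)
  case (infinite S) then show ?case by (simp add: l2_zero)
next
  case empty then show ?case by (simp add: l2_zero)
next
  case (insert x F) then show ?case by (simp add: l2_add)
qed

lemma l2_finsupp: "finite S \<Longrightarrow> (\<And>n. n \<notin> S \<Longrightarrow> f n = 0) \<Longrightarrow> f \<in> l2"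
  unfolding l2_def mem_Collect_eq by (rule summable_finite) auto

lemma l2_sumsq_nonneg: "f \<in> l2 \<Longrightarrow> 0 \<le> (\<Sum>n. (cmod (f n))^2)"
  unfolding l2_def by (rule suminf_nonneg) auto

lemma l2norm_nonneg: "f \<in> l2 \<Longrightarrow> 0 \<le> l2norm f"
  unfolding l2norm_def using l2_sumsq_nonneg by simp

lemma l2_partial: assumes "f \<in> l2" "finite A" shows "L2_set (\<lambda>i. cmod (f i)) A \<le> l2norm f"
proof -
  have "(\<Sum>i\<in>A. (cmod (f i))^2) \<le> (\<Sum>n. (cmod (f n))^2)"
    using assms by (intro sum_le_suminf) (auto simp: l2_def)
  then show ?thesis unfolding L2_set_def l2norm_def by simp
qed

lemma l2_coord: assumes "f \<in> l2" shows "cmod (f p) \<le> l2norm f"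
  using l2_partial[OF assms, of "{p}"] by (simp add: L2_set_def)

lemma l2norm_le: assumes "f \<in> l2" "\<And>N. L2_set (\<lambda>i. cmod (f i)) {..<N} \<le> B"
  shows "l2norm f \<le> B"
proof -
  have B0: "0 \<le> B" using assms(2)[of 0] by (simp add: L2_set_def)
  have "(\<Sum>n. (cmod (f n))^2) \<le> B^2"
  proof (rule suminf_le_const)
    show "summable (\<lambda>n. (cmod (f n))^2)" using assms by (simp add: l2_def)
    fix N
    have "sqrt (\<Sum>i<N. (cmod (f i))^2) \<le> B" using assms(2)[of N] by (simp add: L2_set_def)
    moreover have s0: "0 \<le> (\<Sum>i<N. (cmod (f i))^2)" by (simp add: sum_nonneg)
    ultimately have "(sqrt (\<Sum>i<N. (cmod (f i))^2))^2 \<le> B^2"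
      by (intro power_mono) auto
    then show "(\<Sum>i<N. (cmod (f i))^2) \<le> B^2" using s0 by simp
  qed
  then have "sqrt (\<Sum>n. (cmod (f n))^2) \<le> sqrt (B^2)" by (rule real_sqrt_le_mono)
  then show ?thesis unfolding l2norm_def using B0 by simp
qed

lemma l2norm_triangle: assumes "f \<in> l2" "g \<in> l2"
  shows "l2norm (\<lambda>n. f n + g n) \<le> l2norm f + l2norm g"
proof (rule l2norm_le[OF l2_add[OF assms]])
  fix N
  have "L2_set (\<lambda>i. cmod (f i + g i)) {..<N} \<le> L2_set (\<lambda>i. cmod (f i) + cmod (g i)) {..<N}"
    by (rule L2_set_mono) (auto intro: norm_triangle_ineq)
  also have "\<dots> \<le> L2_set (\<lambda>i. cmod (f i)) {..<N} + L2_set (\<lambda>i. cmod (g i)) {..<N}"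
    by (rule L2_set_triangle_ineq)
  also have "\<dots> \<le> l2norm f + l2norm g"
    using l2_partial[OF assms(1)] l2_partial[OF assms(2)] by (intro add_mono) auto
  finally show "L2_set (\<lambda>i. cmod (f i + g i)) {..<N} \<le> l2norm f + l2norm g" .
qed

lemma l2norm_scale: assumes "f \<in> l2" shows "l2norm (\<lambda>n. c * f n) = cmod c * l2norm f"
proof -
  have "(\<Sum>n. (cmod (c * f n))^2) = (cmod c)^2 * (\<Sum>n. (cmod (f n))^2)"
    using assms by (simp add: l2_def norm_mult power_mult_distrib suminf_mult)
  then show ?thesis unfolding l2norm_def by (simp add: real_sqrt_mult)
qed

lemma l2norm_diff_sym: assumes "f \<in> l2" "g \<in> l2"
  shows "l2norm (\<lambda>n. f n - g n) = l2norm (\<lambda>n. g n - f n)"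
  unfolding l2norm_def by (simp add: norm_minus_commute)

lemma l2norm_finsupp_bound:
  assumes "finite S" "\<And>n. n \<notin> S \<Longrightarrow> f n = 0" "\<And>n. cmod (f n) \<le> c"
  shows "l2norm f \<le> sqrt (card S) * c"
proof -
  have c0: "0 \<le> c" using assms(3)[of 0] norm_ge_zero order_trans by blast
  have "(\<Sum>n. (cmod (f n))^2) = (\<Sum>n\<in>S. (cmod (f n))^2)"
    using assms by (intro suminf_finite) auto
  also have "\<dots> \<le> card S * c^2"
    using sum_bounded_above[of S "\<lambda>n. (cmod (f n))^2" "c^2"] assms(3) c0
    by (simp add: power_mono)
  finally have "sqrt (\<Sum>n. (cmod (f n))^2) \<le> sqrt (card S * c^2)" by (rule real_sqrt_le_mono)
  also have "\<dots> = sqrt (card S) * c" using c0 by (simp add: real_sqrt_mult)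
  finally show ?thesis unfolding l2norm_def .
qed

lemma inner_abs_summable: assumes "f \<in> l2" "g \<in> l2"
  shows "summable (\<lambda>n. cmod (cnj (f n) * g n))"
proof (rule summable_comparison_test[where g="\<lambda>n. (cmod (f n))^2 + (cmod (g n))^2"])
  show "summable (\<lambda>n. (cmod (f n))^2 + (cmod (g n))^2)"
    using assms by (intro summable_add) (auto simp: l2_def)
  show "\<exists>N. \<forall>n\<ge>N. norm (cmod (cnj (f n) * g n)) \<le> (cmod (f n))^2 + (cmod (g n))^2"
  proof (intro exI allI impI)
    fix n
    show "norm (cmod (cnj (f n) * g n)) \<le> (cmod (f n))^2 + (cmod (g n))^2"
    proof -
      have a: "2 * (cmod (f n) * cmod (g n)) \<le> (cmod (f n))^2 + (cmod (g n))^2"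
        using zero_le_power2[of "cmod (f n) - cmod (g n)"] by (simp add: power2_eq_square algebra_simps)
      have b: "0 \<le> cmod (f n) * cmod (g n)" by simp
      have c: "norm (cmod (cnj (f n) * g n)) = cmod (f n) * cmod (g n)" by (simp add: norm_mult)
      show ?thesis using a b c by linarith
    qed
  qed
qed

lemma inner_summable: assumes "f \<in> l2" "g \<in> l2" shows "summable (\<lambda>n. cnj (f n) * g n)"
  using inner_abs_summable[OF assms] by (rule summable_norm_cancel)

lemma inner_bound: assumes "f \<in> l2" "g \<in> l2"
  shows "cmod (l2inner f g) \<le> l2norm f * l2norm g"
proof -
  have "cmod (l2inner f g) \<le> (\<Sum>n. cmod (cnj (f n) * g n))"
    unfolding l2inner_def by (rule summable_norm[OF inner_abs_summable[OF assms]])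
  also have "\<dots> \<le> l2norm f * l2norm g"
  proof (rule suminf_le_const)
    show "summable (\<lambda>n. cmod (cnj (f n) * g n))" by (rule inner_abs_summable[OF assms])
    fix N
    have "(\<Sum>i<N. cmod (cnj (f i) * g i)) = (\<Sum>i<N. \<bar>cmod (f i)\<bar> * \<bar>cmod (g i)\<bar>)"
      by (simp add: norm_mult)
    also have "\<dots> \<le> L2_set (\<lambda>i. cmod (f i)) {..<N} * L2_set (\<lambda>i. cmod (g i)) {..<N}"
      by (rule L2_set_mult_ineq)
    also have "\<dots> \<le> l2norm f * l2norm g"
      by (rule mult_mono[OF l2_partial[OF assms(1)] l2_partial[OF assms(2)] l2norm_nonneg[OF assms(1)] L2_set_nonneg]) auto
    finally show "(\<Sum>i<N. cmod (cnj (f i) * g i)) \<le> l2norm f * l2norm g" .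
  qed
  finally show ?thesis .
qed

lemma inner_add_left: assumes "f \<in> l2" "g \<in> l2" "h \<in> l2" shows
  "l2inner (\<lambda>n. f n + g n) h = l2inner f h + l2inner g h"
proof -
  have e: "(\<lambda>n. cnj (f n + g n) * h n) = (\<lambda>n. cnj (f n) * h n + cnj (g n) * h n)"
    by (simp add: algebra_simps)
  show ?thesis unfolding l2inner_def e
    by (rule suminf_add[symmetric]) (auto intro: inner_summable assms)
qed

lemma inner_add_right: assumes "f \<in> l2" "g \<in> l2" "h \<in> l2" shows
  "l2inner h (\<lambda>n. f n + g n) = l2inner h f + l2inner h g"
proof -
  have e: "(\<lambda>n. cnj (h n) * (f n + g n)) = (\<lambda>n. cnj (h n) * f n + cnj (h n) * g n)"
    by (simp add: algebra_simps)
  show ?thesis unfolding l2inner_def e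
    by (rule suminf_add[symmetric]) (auto intro: inner_summable assms)
qed

lemma inner_diff_left: assumes "f \<in> l2" "g \<in> l2" "h \<in> l2" shows
  "l2inner (\<lambda>n. f n - g n) h = l2inner f h - l2inner g h"
proof -
  have e: "(\<lambda>n. cnj (f n - g n) * h n) = (\<lambda>n. cnj (f n) * h n - cnj (g n) * h n)"
    by (simp add: algebra_simps)
  show ?thesis unfolding l2inner_def e
    by (rule suminf_diff[symmetric]) (auto intro: inner_summable assms)
qed

lemma inner_scale_left: assumes "f \<in> l2" "h \<in> l2" shows
  "l2inner (\<lambda>n. c * f n) h = cnj c * l2inner f h"
proof -
  have e: "(\<lambda>n. cnj (c * f n) * h n) = (\<lambda>n. cnj c * (cnj (f n) * h n))"
    by (simp add: algebra_simps)
  show ?thesis unfolding l2inner_def e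
    by (rule suminf_mult) (auto intro: inner_summable assms)
qed

lemma inner_scale_right: assumes "f \<in> l2" "h \<in> l2" shows
  "l2inner h (\<lambda>n. c * f n) = c * l2inner h f"
proof -
  have e: "(\<lambda>n. cnj (h n) * (c * f n)) = (\<lambda>n. c * (cnj (h n) * f n))"
    by (simp add: algebra_simps)
  show ?thesis unfolding l2inner_def e
    by (rule suminf_mult) (auto intro: inner_summable assms)
qed

lemma inner_sum_left: "(\<And>k. k \<in> S \<Longrightarrow> G k \<in> l2) \<Longrightarrow> h \<in> l2 \<Longrightarrow>
  l2inner (\<lambda>n. \<Sum>k\<in>S. G k n) h = (\<Sum>k\<in>S. l2inner (G k) h)"
proof (induction S rule: infinite_finite_induct)
  case (infinite S) then show ?case unfolding l2inner_def by simp
next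
  case empty then show ?case unfolding l2inner_def by simp
next
  case (insert x S)
  have IH: "l2inner (\<lambda>n. \<Sum>k\<in>S. G k n) h = (\<Sum>k\<in>S. l2inner (G k) h)"
    by (rule insert.IH) (use insert.prems in auto)
  have l: "(\<lambda>n. \<Sum>k\<in>S. G k n) \<in> l2" by (rule l2_sum) (use insert.prems in auto)
  have gx: "G x \<in> l2" using insert.prems by auto
  have "l2inner (\<lambda>n. \<Sum>k\<in>insert x S. G k n) h = l2inner (\<lambda>n. G x n + (\<Sum>k\<in>S. G k n)) h"
    by (simp only: sum.insert[OF insert.hyps])
  also have "\<dots> = l2inner (G x) h + l2inner (\<lambda>n. \<Sum>k\<in>S. G k n) h"
    by (rule inner_add_left[OF gx l insert.prems(2)])
  also have "\<dots> = (\<Sum>k\<in>insert x S. l2inner (G k) h)"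
    by (simp only: IH sum.insert[OF insert.hyps])
  finally show ?case .
qed

lemma inner_sum_right: "(\<And>k. k \<in> S \<Longrightarrow> G k \<in> l2) \<Longrightarrow> h \<in> l2 \<Longrightarrow>
  l2inner h (\<lambda>n. \<Sum>k\<in>S. G k n) = (\<Sum>k\<in>S. l2inner h (G k))"
proof (induction S rule: infinite_finite_induct)
  case (infinite S) then show ?case unfolding l2inner_def by simp
next
  case empty then show ?case unfolding l2inner_def by simp
next
  case (insert x S)
  have IH: "l2inner h (\<lambda>n. \<Sum>k\<in>S. G k n) = (\<Sum>k\<in>S. l2inner h (G k))"
    by (rule insert.IH) (use insert.prems in auto)
  have l: "(\<lambda>n. \<Sum>k\<in>S. G k n) \<in> l2" by (rule l2_sum) (use insert.prems in auto)
  have gx: "G x \<in> l2" using insert.prems by auto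
  have "l2inner h (\<lambda>n. \<Sum>k\<in>insert x S. G k n) = l2inner h (\<lambda>n. G x n + (\<Sum>k\<in>S. G k n))"
    by (simp only: sum.insert[OF insert.hyps])
  also have "\<dots> = l2inner h (G x) + l2inner h (\<lambda>n. \<Sum>k\<in>S. G k n)"
    by (rule inner_add_right[OF gx l insert.prems(2)])
  also have "\<dots> = (\<Sum>k\<in>insert x S. l2inner h (G k))"
    by (simp only: IH sum.insert[OF insert.hyps])
  finally show ?case .
qed

lemma inner_conj: assumes "f \<in> l2" "g \<in> l2" shows "l2inner f g = cnj (l2inner g f)"
proof -
  have "(\<lambda>n. cnj (g n) * f n) sums l2inner g f"
    unfolding l2inner_def by (rule summable_sums[OF inner_summable[OF assms(2,1)]])
  then have "(\<lambda>n. cnj (cnj (g n) * f n)) sums cnj (l2inner g f)"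
    by (rule sums_cnj[THEN iffD2])
  then have "(\<lambda>n. cnj (f n) * g n) sums cnj (l2inner g f)"
    by (simp add: mult.commute)
  then show ?thesis unfolding l2inner_def by (rule sums_unique[symmetric])
qed

definition lconv :: "(nat \<Rightarrow> nat \<Rightarrow> complex) \<Rightarrow> (nat \<Rightarrow> complex) \<Rightarrow> bool" where
  "lconv X \<psi> \<longleftrightarrow> (\<lambda>K. l2norm (\<lambda>n. X K n - \<psi> n)) \<longlonglongrightarrow> 0"

lemma lconv_coord: assumes "\<And>K. X K \<in> l2" "\<psi> \<in> l2" "lconv X \<psi>"
  shows "(\<lambda>K. X K p) \<longlonglongrightarrow> \<psi> p"
proof -
  have "(\<lambda>K. X K p - \<psi> p) \<longlonglongrightarrow> 0"
  proof (rule Lim_null_comparison)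
    show "\<forall>\<^sub>F K in sequentially. norm (X K p - \<psi> p) \<le> l2norm (\<lambda>n. X K n - \<psi> n)"
      using l2_coord[OF l2_diff[OF assms(1) assms(2)]] by auto
    show "(\<lambda>K. l2norm (\<lambda>n. X K n - \<psi> n)) \<longlonglongrightarrow> 0" using assms(3) by (simp add: lconv_def)
  qed
  then show ?thesis by (rule LIM_zero_cancel)
qed

lemma lconv_unique: assumes "\<And>K. X K \<in> l2" "\<psi>1 \<in> l2" "lconv X \<psi>1" "\<psi>2 \<in> l2" "lconv X \<psi>2"
  shows "\<psi>1 = \<psi>2"
proof
  fix p show "\<psi>1 p = \<psi>2 p"
    using LIMSEQ_unique[OF lconv_coord[OF assms(1-3)] lconv_coord[OF assms(1,4,5)]] .
qed

lemma lconv_add: assumes "\<And>K. X K \<in> l2" "\<And>K. Y K \<in> l2" "\<psi>1 \<in> l2" "\<psi>2 \<in> l2"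
  "lconv X \<psi>1" "lconv Y \<psi>2"
  shows "lconv (\<lambda>K n. X K n + Y K n) (\<lambda>n. \<psi>1 n + \<psi>2 n)"
  unfolding lconv_def
proof (rule Lim_null_comparison)
  show "\<forall>\<^sub>F K in sequentially. norm (l2norm (\<lambda>n. X K n + Y K n - (\<psi>1 n + \<psi>2 n)))
        \<le> l2norm (\<lambda>n. X K n - \<psi>1 n) + l2norm (\<lambda>n. Y K n - \<psi>2 n)"
  proof (intro always_eventually allI)
    fix K
    have e: "(\<lambda>n. X K n + Y K n - (\<psi>1 n + \<psi>2 n)) = (\<lambda>n. (X K n - \<psi>1 n) + (Y K n - \<psi>2 n))"
      by (simp add: algebra_simps)
    have a: "(\<lambda>n. X K n - \<psi>1 n) \<in> l2" "(\<lambda>n. Y K n - \<psi>2 n) \<in> l2"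
      using assms by (auto intro: l2_diff)
    show "norm (l2norm (\<lambda>n. X K n + Y K n - (\<psi>1 n + \<psi>2 n)))
        \<le> l2norm (\<lambda>n. X K n - \<psi>1 n) + l2norm (\<lambda>n. Y K n - \<psi>2 n)"
      unfolding e using l2norm_triangle[OF a] l2norm_nonneg[OF l2_add[OF a]] by simp
  qed
  show "(\<lambda>K. l2norm (\<lambda>n. X K n - \<psi>1 n) + l2norm (\<lambda>n. Y K n - \<psi>2 n)) \<longlonglongrightarrow> 0"
    using assms(5,6) unfolding lconv_def by (simp add: tendsto_add_zero)
qed

lemma lconv_scale: assumes "\<And>K. X K \<in> l2" "\<psi> \<in> l2" "lconv X \<psi>"
  shows "lconv (\<lambda>K n. c * X K n) (\<lambda>n. c * \<psi> n)"
proof -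
  have "(\<lambda>K. cmod c * l2norm (\<lambda>n. X K n - \<psi> n)) \<longlonglongrightarrow> cmod c * 0"
    using assms(3) unfolding lconv_def by (intro tendsto_mult) auto
  moreover have "l2norm (\<lambda>n. c * X K n - c * \<psi> n) = cmod c * l2norm (\<lambda>n. X K n - \<psi> n)" for K
    using l2norm_scale[OF l2_diff[OF assms(1,2)], of c K] by (simp add: right_diff_distrib)
  ultimately show ?thesis unfolding lconv_def by simp
qed

lemma lconv_inner_left: assumes "\<And>K. X K \<in> l2" "\<psi> \<in> l2" "lconv X \<psi>" "h \<in> l2"
  shows "(\<lambda>K. l2inner (X K) h) \<longlonglongrightarrow> l2inner \<psi> h"
proof -
  have "(\<lambda>K. l2inner (X K) h - l2inner \<psi> h) \<longlonglongrightarrow> 0"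
  proof (rule Lim_null_comparison)
    show "\<forall>\<^sub>F K in sequentially. norm (l2inner (X K) h - l2inner \<psi> h) \<le> l2norm (\<lambda>n. X K n - \<psi> n) * l2norm h"
      using inner_bound[OF l2_diff[OF assms(1,2)] assms(4)] inner_diff_left[OF assms(1,2,4)] by auto
    show "(\<lambda>K. l2norm (\<lambda>n. X K n - \<psi> n) * l2norm h) \<longlonglongrightarrow> 0"
      using assms(3) unfolding lconv_def by (simp add: tendsto_mult_left_zero)
  qed
  then show ?thesis by (rule LIM_zero_cancel)
qed

lemma lconv_inner_right: assumes "\<And>K. X K \<in> l2" "\<psi> \<in> l2" "lconv X \<psi>" "h \<in> l2"
  shows "(\<lambda>K. l2inner h (X K)) \<longlonglongrightarrow> l2inner h \<psi>"
proof -
  have "(\<lambda>K. cnj (l2inner (X K) h)) \<longlonglongrightarrow> cnj (l2inner \<psi> h)"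
    by (rule tendsto_cnj[OF lconv_inner_left[OF assms]])
  moreover have "l2inner h (X K) = cnj (l2inner (X K) h)" for K using inner_conj assms by blast
  moreover have "l2inner h \<psi> = cnj (l2inner \<psi> h)" using inner_conj assms by blast
  ultimately show ?thesis by simp
qed

lemma lshift_pow: "(lshift ^^ j) f = (\<lambda>n. f (n + j))"
  by (induction j arbitrary: f) (auto simp: lshift_def)

lemma rshift_pow: "(rshift ^^ j) f = (\<lambda>n. if j \<le> n then f (n - j) else 0)"
proof (induction j)
  case 0 then show ?case by simp
next
  case (Suc j) then show ?case
    by (auto simp: rshift_def fun_eq_iff)
qed

lemma Lpow: "((lshift ^^ m) ^^ k) f = (\<lambda>n. f (n + m * k))"
  by (simp add: funpow_mult lshift_pow)

lemma Rpow: "((rshift ^^ m) ^^ k) f = (\<lambda>n. if m * k \<le> n then f (n - m * k) else 0)"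
  by (simp add: funpow_mult rshift_pow)

lemma l2_lsh: "f \<in> l2 \<Longrightarrow> (\<lambda>n. f (n + j)) \<in> l2"
  unfolding l2_def by (simp add: summable_iff_shift[of "\<lambda>n. (cmod (f n))^2" j])

lemma l2_rsh: assumes "f \<in> l2" shows "(\<lambda>n. if j \<le> n then f (n - j) else 0) \<in> l2"
proof -
  let ?g = "\<lambda>n. (cmod (if j \<le> n then f (n - j) else 0))^2"
  have "(\<lambda>n. ?g (n + j)) = (\<lambda>n. (cmod (f n))^2)" by simp
  then have "summable (\<lambda>n. ?g (n + j))" using assms by (simp add: l2_def)
  then show ?thesis unfolding l2_def mem_Collect_eq by (rule summable_iff_shift[THEN iffD1])
qed

lemma adj: assumes "f \<in> l2" "g \<in> l2"
  shows "l2inner (\<lambda>n. f (n + j)) g = l2inner f (\<lambda>n. if j \<le> n then g (n - j) else 0)"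
proof -
  let ?h = "\<lambda>n. cnj (f n) * (if j \<le> n then g (n - j) else 0)"
  have s: "summable ?h" using inner_summable[OF assms(1) l2_rsh[OF assms(2)]] by simp
  have "suminf ?h = (\<Sum>n. ?h (n + j)) + (\<Sum>i<j. ?h i)" by (rule suminf_split_initial_segment[OF s])
  also have "(\<Sum>i<j. ?h i) = 0" by (intro sum.neutral) auto
  also have "(\<lambda>n. ?h (n + j)) = (\<lambda>n. cnj (f (n + j)) * g n)" by simp
  finally show ?thesis unfolding l2inner_def by simp
qed

definition psum :: "complex \<Rightarrow> ((nat \<Rightarrow> complex) \<Rightarrow> (nat \<Rightarrow> complex)) \<Rightarrow> (nat \<Rightarrow> complex) \<Rightarrow> nat \<Rightarrow> nat \<Rightarrow> complex" where
  "psum w A \<phi> K = (\<lambda>n. \<Sum>k=1..K. (1 / of_nat k) * (inverse w)^k * (A ^^ k) \<phi> n)"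

definition logv :: "complex \<Rightarrow> ((nat \<Rightarrow> complex) \<Rightarrow> (nat \<Rightarrow> complex)) \<Rightarrow> (nat \<Rightarrow> complex) \<Rightarrow> (nat \<Rightarrow> complex)" where
  "logv w A \<phi> = (THE \<psi>. log_series_conv w A \<phi> \<psi>)"

lemma lsc_iff: "log_series_conv w A \<phi> \<psi> \<longleftrightarrow> \<psi> \<in> l2 \<and> lconv (psum w A \<phi>) \<psi>"
  by (simp add: log_series_conv_def lconv_def psum_def)

lemma Log_op_logv: "Log_op w A \<phi> = (\<lambda>n. Ln w * \<phi> n - logv w A \<phi> n)"
  by (simp add: Log_op_def logv_def)

locale goodop =
  fixes A :: "(nat \<Rightarrow> complex) \<Rightarrow> (nat \<Rightarrow> complex)"
  assumes A_l2: "\<And>f k. f \<in> l2 \<Longrightarrow> (A ^^ k) f \<in> l2"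
    and A_add: "\<And>f g k. (A ^^ k) (\<lambda>n. f n + g n) = (\<lambda>n. (A ^^ k) f n + (A ^^ k) g n)"
    and A_scale: "\<And>f c k. (A ^^ k) (\<lambda>n. c * f n) = (\<lambda>n. c * (A ^^ k) f n)"
begin

lemma psum_l2: "\<phi> \<in> l2 \<Longrightarrow> psum w A \<phi> K \<in> l2"
  unfolding psum_def by (intro l2_sum l2_scale A_l2)

lemma Log_dom_iff: "\<phi> \<in> Log_dom w l2 A \<longleftrightarrow> \<phi> \<in> l2 \<and> (\<exists>\<psi>. \<psi> \<in> l2 \<and> lconv (psum w A \<phi>) \<psi>)"
proof
  assume "\<phi> \<in> Log_dom w l2 A"
  then have "(A ^^ 0) \<phi> \<in> l2" "\<exists>\<psi>. log_series_conv w A \<phi> \<psi>" unfolding Log_dom_def by blast+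
  then show "\<phi> \<in> l2 \<and> (\<exists>\<psi>. \<psi> \<in> l2 \<and> lconv (psum w A \<phi>) \<psi>)" by (simp add: lsc_iff)
next
  assume "\<phi> \<in> l2 \<and> (\<exists>\<psi>. \<psi> \<in> l2 \<and> lconv (psum w A \<phi>) \<psi>)"
  then show "\<phi> \<in> Log_dom w l2 A" unfolding Log_dom_def by (auto simp: lsc_iff A_l2)
qed

lemma logv_eq: assumes "\<phi> \<in> l2" "\<psi> \<in> l2" "lconv (psum w A \<phi>) \<psi>"
  shows "logv w A \<phi> = \<psi>"
  unfolding logv_def
proof (rule the_equality)
  show "log_series_conv w A \<phi> \<psi>" using assms by (simp add: lsc_iff)
  fix z assume "log_series_conv w A \<phi> z"
  then have "z \<in> l2" "lconv (psum w A \<phi>) z" by (auto simp: lsc_iff)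
  then show "z = \<psi>" using psum_l2[OF assms(1)] assms by (intro lconv_unique[of "psum w A \<phi>"]) auto
qed

lemma logv_prop: assumes "\<phi> \<in> Log_dom w l2 A"
  shows "\<phi> \<in> l2" "logv w A \<phi> \<in> l2" "lconv (psum w A \<phi>) (logv w A \<phi>)"
proof -
  from assms obtain \<psi> where "\<phi> \<in> l2" "\<psi> \<in> l2" "lconv (psum w A \<phi>) \<psi>" by (auto simp: Log_dom_iff)
  then show "\<phi> \<in> l2" "logv w A \<phi> \<in> l2" "lconv (psum w A \<phi>) (logv w A \<phi>)"
    using logv_eq by auto
qed

lemma psum_add: "psum w A (\<lambda>n. f n + g n) K = (\<lambda>n. psum w A f K n + psum w A g K n)"
  unfolding psum_def by (simp add: A_add distrib_left sum.distrib)

lemma psum_scale: "psum w A (\<lambda>n. c * f n) K = (\<lambda>n. c * psum w A f K n)"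
  unfolding psum_def by (simp add: A_scale sum_distrib_left algebra_simps)

lemma Log_dom_add: assumes "f \<in> Log_dom w l2 A" "g \<in> Log_dom w l2 A"
  shows "(\<lambda>n. f n + g n) \<in> Log_dom w l2 A"
    "logv w A (\<lambda>n. f n + g n) = (\<lambda>n. logv w A f n + logv w A g n)"
proof -
  note F = logv_prop[OF assms(1)] and G = logv_prop[OF assms(2)]
  have l: "lconv (psum w A (\<lambda>n. f n + g n)) (\<lambda>n. logv w A f n + logv w A g n)"
    unfolding psum_add using lconv_add[OF psum_l2[OF F(1)] psum_l2[OF G(1)] F(2) G(2) F(3) G(3)] by simp
  have a: "(\<lambda>n. f n + g n) \<in> l2" "(\<lambda>n. logv w A f n + logv w A g n) \<in> l2"
    using F G by (auto intro: l2_add)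
  show "(\<lambda>n. f n + g n) \<in> Log_dom w l2 A" using a l by (auto simp: Log_dom_iff)
  show "logv w A (\<lambda>n. f n + g n) = (\<lambda>n. logv w A f n + logv w A g n)"
    by (rule logv_eq[OF a l])
qed

lemma Log_dom_scale: assumes "f \<in> Log_dom w l2 A"
  shows "(\<lambda>n. c * f n) \<in> Log_dom w l2 A"
    "logv w A (\<lambda>n. c * f n) = (\<lambda>n. c * logv w A f n)"
proof -
  note F = logv_prop[OF assms(1)]
  have l: "lconv (psum w A (\<lambda>n. c * f n)) (\<lambda>n. c * logv w A f n)"
    unfolding psum_scale using lconv_scale[OF psum_l2[OF F(1)] F(2) F(3)] by simp
  have a: "(\<lambda>n. c * f n) \<in> l2" "(\<lambda>n. c * logv w A f n) \<in> l2"
    using F by (auto intro: l2_scale)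
  show "(\<lambda>n. c * f n) \<in> Log_dom w l2 A" using a l by (auto simp: Log_dom_iff)
  show "logv w A (\<lambda>n. c * f n) = (\<lambda>n. c * logv w A f n)"
    by (rule logv_eq[OF a l])
qed

lemma Log_dom_zero: "(\<lambda>n. 0) \<in> Log_dom w l2 A"
proof -
  have "psum w A (\<lambda>n. 0) K = (\<lambda>n. 0)" for K
    using psum_scale[of w 0 "\<lambda>n. 0" K] by simp
  then have "lconv (psum w A (\<lambda>n. 0)) (\<lambda>n. 0)" unfolding lconv_def
    by (simp add: l2norm_def)
  then show ?thesis using l2_zero by (auto simp: Log_dom_iff)
qed

end

lemma goodL: "goodop (lshift ^^ m)"
  by unfold_locales (auto simp: Lpow l2_lsh)

lemma goodR: "goodop (rshift ^^ m)"
  by unfold_locales (auto simp: Rpow l2_rsh fun_eq_iff)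

lemma sum_Suc_split: "(\<Sum>k=1..Suc K. F k) = F 1 + (\<Sum>k=1..K. F (Suc k))"
  by (induction K) (auto simp: ac_simps)

lemma lin_comb: "(\<lambda>n. a*(f n + g n) + b*(p n + q n) + c * (r n + t n)) =
   (\<lambda>n. (a*f n + b*p n + c*r n) + (a*g n + b*q n + c * t n))" for a b c :: complex
  by (rule ext) (simp add: distrib_left add_ac)

lemma lin_scale: "(\<lambda>n. a*(e*f n) + b*(e*p n) + c*(e*r n)) = (\<lambda>n. e*(a*f n + b*p n + c*r n))" for a b c e :: complex
  by (rule ext) (simp add: distrib_left mult.left_commute)

lemma gen_id: "x * ((a*p - q) - (b*p - r)) = (x*(a-b))*p + (-x)*q + x*r" for x a b p q r :: complex
  by (simp add: algebra_simps)

lemma lin3_left: assumes "f \<in> l2" "g \<in> l2" "h \<in> l2" "z \<in> l2"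
  shows "l2inner (\<lambda>n. a * f n + b * g n + c * h n) z
    = cnj a * l2inner f z + cnj b * l2inner g z + cnj c * l2inner h z"
  using assms by (simp add: inner_add_left inner_scale_left l2_add l2_scale)

lemma lin3_right: assumes "f \<in> l2" "g \<in> l2" "h \<in> l2" "z \<in> l2"
  shows "l2inner z (\<lambda>n. a * f n + b * g n + c * h n)
    = a * l2inner z f + b * l2inner z g + c * l2inner z h"
  using assms by (simp add: inner_add_right inner_scale_right l2_add l2_scale)

lemma key_adj:
  assumes "\<phi> \<in> Log_dom w l2 (lshift ^^ m)" "z \<in> Log_dom (cnj w) l2 (rshift ^^ m)"
  shows "l2inner (logv w (lshift ^^ m) \<phi>) z = l2inner \<phi> (logv (cnj w) (rshift ^^ m) z)"
proof -
  note P = goodop.logv_prop[OF goodL assms(1)] and Q = goodop.logv_prop[OF goodR assms(2)]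
  have eq: "l2inner (psum w (lshift ^^ m) \<phi> K) z = l2inner \<phi> (psum (cnj w) (rshift ^^ m) z K)" for K
  proof -
    have l1: "\<And>k. (\<lambda>n. (1 / of_nat k) * (inverse w)^k * ((lshift ^^ m) ^^ k) \<phi> n) \<in> l2"
      by (intro l2_scale goodop.A_l2[OF goodL] P(1))
    have l2': "\<And>k. (\<lambda>n. (1 / of_nat k) * (inverse (cnj w))^k * ((rshift ^^ m) ^^ k) z n) \<in> l2"
      by (intro l2_scale goodop.A_l2[OF goodR] Q(1))
    have "l2inner (psum w (lshift ^^ m) \<phi> K) z
        = (\<Sum>k=1..K. l2inner (\<lambda>n. (1 / of_nat k) * (inverse w)^k * ((lshift ^^ m) ^^ k) \<phi> n) z)"
      unfolding psum_def by (rule inner_sum_left[OF l1 Q(1)])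
    also have "\<dots> = (\<Sum>k=1..K. cnj ((1 / of_nat k) * (inverse w)^k) * l2inner (((lshift ^^ m) ^^ k) \<phi>) z)"
    proof (rule sum.cong[OF refl])
      fix k
      show "l2inner (\<lambda>n. (1 / of_nat k) * (inverse w)^k * ((lshift ^^ m) ^^ k) \<phi> n) z
          = cnj ((1 / of_nat k) * (inverse w)^k) * l2inner (((lshift ^^ m) ^^ k) \<phi>) z"
        using inner_scale_left[OF goodop.A_l2[OF goodL P(1)] Q(1), of "(1 / of_nat k) * (inverse w)^k" k]
        by simp
    qed
    also have "\<dots> = (\<Sum>k=1..K. ((1 / of_nat k) * (inverse (cnj w))^k) * l2inner \<phi> (((rshift ^^ m) ^^ k) z))"
    proof (rule sum.cong[OF refl])
      fix k
      have "l2inner (((lshift ^^ m) ^^ k) \<phi>) z = l2inner \<phi> (((rshift ^^ m) ^^ k) z)"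
        unfolding Lpow Rpow by (rule adj[OF P(1) Q(1)])
      then show "cnj ((1 / of_nat k) * (inverse w)^k) * l2inner (((lshift ^^ m) ^^ k) \<phi>) z
          = ((1 / of_nat k) * (inverse (cnj w))^k) * l2inner \<phi> (((rshift ^^ m) ^^ k) z)"
        by simp
    qed
    also have "\<dots> = (\<Sum>k=1..K. l2inner \<phi> (\<lambda>n. (1 / of_nat k) * (inverse (cnj w))^k * ((rshift ^^ m) ^^ k) z n))"
    proof (rule sum.cong[OF refl])
      fix k
      show "((1 / of_nat k) * (inverse (cnj w))^k) * l2inner \<phi> (((rshift ^^ m) ^^ k) z)
          = l2inner \<phi> (\<lambda>n. (1 / of_nat k) * (inverse (cnj w))^k * ((rshift ^^ m) ^^ k) z n)"
        using inner_scale_right[OF goodop.A_l2[OF goodR Q(1)] P(1), of "(1 / of_nat k) * (inverse (cnj w))^k" k]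
        by simp
    qed
    also have "\<dots> = l2inner \<phi> (psum (cnj w) (rshift ^^ m) z K)"
      unfolding psum_def by (rule inner_sum_right[OF l2' P(1), symmetric])
    finally show ?thesis .
  qed
  have t1: "(\<lambda>K. l2inner (psum w (lshift ^^ m) \<phi> K) z) \<longlonglongrightarrow> l2inner (logv w (lshift ^^ m) \<phi>) z"
    by (rule lconv_inner_left[OF goodop.psum_l2[OF goodL P(1)] P(2) P(3) Q(1)])
  have t2: "(\<lambda>K. l2inner \<phi> (psum (cnj w) (rshift ^^ m) z K)) \<longlonglongrightarrow> l2inner \<phi> (logv (cnj w) (rshift ^^ m) z)"
    by (rule lconv_inner_right[OF goodop.psum_l2[OF goodR Q(1)] Q(2) Q(3) P(1)])
  show ?thesis using t1 t2 unfolding eq by (rule LIMSEQ_unique)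
qed

context
  fixes \<omega> :: complex and m :: nat
  assumes om: "cmod \<omega> = 1" and m1: "m \<ge> 1"
begin

abbreviation "LL \<equiv> lshift ^^ m"
abbreviation "RR \<equiv> rshift ^^ m"
abbreviation "cc \<equiv> Ln \<omega> - Ln (cnj \<omega>)"

lemma Lmw_expand: "Lmw m \<omega> \<phi> = (\<lambda>n. (\<i> / of_nat m * cc) * \<phi> n + (- (\<i> / of_nat m)) * logv \<omega> LL \<phi> n
    + (\<i> / of_nat m) * logv (cnj \<omega>) RR \<phi> n)"
  unfolding Lmw_def Log_op_logv by (rule ext) (rule gen_id)

lemma dom_facts: assumes "\<phi> \<in> Lmw_dom m \<omega>"
  shows "\<phi> \<in> Log_dom \<omega> l2 LL" "\<phi> \<in> Log_dom (cnj \<omega>) l2 RR" "\<phi> \<in> l2"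
    "logv \<omega> LL \<phi> \<in> l2" "logv (cnj \<omega>) RR \<phi> \<in> l2"
  using assms goodop.logv_prop[OF goodL] goodop.logv_prop[OF goodR] unfolding Lmw_dom_def by auto

lemma Lmw_l2: assumes "\<phi> \<in> Lmw_dom m \<omega>" shows "Lmw m \<omega> \<phi> \<in> l2"
  unfolding Lmw_expand using dom_facts[OF assms] by (intro l2_add l2_scale)

lemma cc_real: "cnj cc = - cc"
proof -
  have "\<omega> \<noteq> 0" "cnj \<omega> \<noteq> 0" using om by auto
  then have "Re cc = 0" using om by simp
  then show ?thesis by (simp add: complex_eq_iff)
qed

lemma Lmw_herm: assumes "\<phi> \<in> Lmw_dom m \<omega>" "z \<in> Lmw_dom m \<omega>"
  shows "l2inner (Lmw m \<omega> \<phi>) z = l2inner \<phi> (Lmw m \<omega> z)"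
proof -
  note P = dom_facts[OF assms(1)] and Q = dom_facts[OF assms(2)]
  have k1: "l2inner (logv \<omega> LL \<phi>) z = l2inner \<phi> (logv (cnj \<omega>) RR z)"
    by (rule key_adj[OF P(1) Q(2)])
  have k2: "l2inner (logv \<omega> LL z) \<phi> = l2inner z (logv (cnj \<omega>) RR \<phi>)"
    by (rule key_adj[OF Q(1) P(2)])
  have k2': "l2inner (logv (cnj \<omega>) RR \<phi>) z = l2inner \<phi> (logv \<omega> LL z)"
  proof -
    have "l2inner (logv (cnj \<omega>) RR \<phi>) z = cnj (l2inner z (logv (cnj \<omega>) RR \<phi>))"
      by (rule inner_conj[OF P(5) Q(3)])
    also have "\<dots> = cnj (l2inner (logv \<omega> LL z) \<phi>)" by (simp only: k2)
    also have "\<dots> = l2inner \<phi> (logv \<omega> LL z)" by (rule inner_conj[OF P(3) Q(4), symmetric])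
    finally show ?thesis .
  qed
  have c1: "cnj (\<i> / of_nat m * cc) = \<i> / of_nat m * cc"
  proof -
    have "cnj (\<i> / of_nat m * cc) = (- \<i> / of_nat m) * cnj cc" by simp
    also have "\<dots> = (- \<i> / of_nat m) * (- cc)" by (simp only: cc_real)
    also have "\<dots> = \<i> / of_nat m * cc" by (simp add: algebra_simps)
    finally show ?thesis .
  qed
  show ?thesis
    unfolding Lmw_expand lin3_left[OF P(3) P(4) P(5) Q(3)] lin3_right[OF Q(3) Q(4) Q(5) P(3)]
    using c1 k1 k2' by simp
qed

lemma Lmw_dom_add: assumes "f \<in> Lmw_dom m \<omega>" "g \<in> Lmw_dom m \<omega>"
  shows "(\<lambda>n. f n + g n) \<in> Lmw_dom m \<omega>"
    "Lmw m \<omega> (\<lambda>n. f n + g n) = (\<lambda>n. Lmw m \<omega> f n + Lmw m \<omega> g n)"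
proof -
  note F = dom_facts[OF assms(1)] and G = dom_facts[OF assms(2)]
  note a1 = goodop.Log_dom_add[OF goodL F(1) G(1)] and a2 = goodop.Log_dom_add[OF goodR F(2) G(2)]
  show "(\<lambda>n. f n + g n) \<in> Lmw_dom m \<omega>" using a1 a2 by (simp add: Lmw_dom_def)
  show "Lmw m \<omega> (\<lambda>n. f n + g n) = (\<lambda>n. Lmw m \<omega> f n + Lmw m \<omega> g n)"
    unfolding Lmw_expand a1(2) a2(2) by (rule lin_comb)
qed

lemma Lmw_dom_scale: assumes "f \<in> Lmw_dom m \<omega>"
  shows "(\<lambda>n. c * f n) \<in> Lmw_dom m \<omega>"
    "Lmw m \<omega> (\<lambda>n. c * f n) = (\<lambda>n. c * Lmw m \<omega> f n)"
proof -
  note F = dom_facts[OF assms(1)]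
  note a1 = goodop.Log_dom_scale[OF goodL F(1)] and a2 = goodop.Log_dom_scale[OF goodR F(2)]
  show "(\<lambda>n. c * f n) \<in> Lmw_dom m \<omega>" using a1 a2 by (simp add: Lmw_dom_def)
  show "Lmw m \<omega> (\<lambda>n. c * f n) = (\<lambda>n. c * Lmw m \<omega> f n)"
    unfolding Lmw_expand a1(2) a2(2) by (rule lin_scale)
qed

lemma Lmw_dom_zero: "(\<lambda>n. 0) \<in> Lmw_dom m \<omega>"
  using goodop.Log_dom_zero[OF goodL] goodop.Log_dom_zero[OF goodR] by (simp add: Lmw_dom_def)

end

lemma H_alg: "(m::complex) \<noteq> 0 \<Longrightarrow>
  p * (al * f + (- (\<i> / m)) * b1 + (\<i> / m) * a1) - (al * (p * f) + (- (\<i> / m)) * b2 + (\<i> / m) * a2)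
  = \<i> * ((b2 - p * b1) / m + (p * a1 - a2) / m)"
  by (simp add: field_simps)

context
  fixes \<omega> :: complex and m :: nat
  assumes om: "cmod \<omega> = 1" and m1: "m \<ge> 1"
begin

lemma om_inv: "inverse \<omega> * \<omega> = 1" "inverse (cnj \<omega>) = \<omega>"
proof -
  show "inverse \<omega> * \<omega> = 1" using om by (auto simp: field_simps)
  have "\<omega> * cnj \<omega> = 1" using om complex_norm_square[of \<omega>] by simp
  moreover have "cnj \<omega> \<noteq> 0" using om by auto
  ultimately show "inverse (cnj \<omega>) = \<omega>" by (simp add: field_simps inverse_eq_divide)
qed

lemma psumL_coord: "psum w (lshift ^^ m) f K p = (\<Sum>k=1..K. (1 / of_nat k) * (inverse w)^k * f (p + m * k))"
  by (simp add: psum_def Lpow)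

lemma psumR_coord: "psum w (rshift ^^ m) f K p =
   (\<Sum>k=1..K. (1 / of_nat k) * (inverse w)^k * (if m * k \<le> p then f (p - m * k) else 0))"
  by (simp add: psum_def Rpow)

lemma comm:
  assumes A1: "\<phi> \<in> Lmw_dom m \<omega>" and A2: "Lmw m \<omega> \<phi> \<in> numop_dom"
    and A3: "\<phi> \<in> numop_dom" and A4: "numop \<phi> \<in> Lmw_dom m \<omega>"
  shows "(\<lambda>n. numop (Lmw m \<omega> \<phi>) n - Lmw m \<omega> (numop \<phi>) n) = (\<lambda>n. - \<i> * \<phi> n)"
proof -
  define N\<phi> where "N\<phi> = numop \<phi>"
  note P = dom_facts[OF om m1 A1] and Q = dom_facts[OF om m1 A4[folded N\<phi>_def]]
  define a where "a = inverse \<omega>"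
  define B1 where "B1 = logv \<omega> (lshift ^^ m) \<phi>"
  define A1' where "A1' = logv (cnj \<omega>) (rshift ^^ m) \<phi>"
  define B2 where "B2 = logv \<omega> (lshift ^^ m) N\<phi>"
  define A2' where "A2' = logv (cnj \<omega>) (rshift ^^ m) N\<phi>"
  have m0: "(of_nat m :: complex) \<noteq> 0" using m1 by simp
  have aw: "a * \<omega> = 1" unfolding a_def by (rule om_inv(1))
  have bw: "inverse (cnj \<omega>) = \<omega>" by (rule om_inv(2))
  have cB1: "(\<lambda>K. psum \<omega> (lshift ^^ m) \<phi> K p) \<longlonglongrightarrow> B1 p" for p
    unfolding B1_def using goodop.logv_prop[OF goodL P(1)] goodop.psum_l2[OF goodL P(3)]
    by (intro lconv_coord) auto
  have cB2: "(\<lambda>K. psum \<omega> (lshift ^^ m) N\<phi> K p) \<longlonglongrightarrow> B2 p" for p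
    unfolding B2_def using goodop.logv_prop[OF goodL Q(1)] goodop.psum_l2[OF goodL Q(3)]
    by (intro lconv_coord) auto
  have cA1: "(\<lambda>K. psum (cnj \<omega>) (rshift ^^ m) \<phi> K p) \<longlonglongrightarrow> A1' p" for p
    unfolding A1'_def using goodop.logv_prop[OF goodR P(2)] goodop.psum_l2[OF goodR P(3)]
    by (intro lconv_coord) auto
  have cA2: "(\<lambda>K. psum (cnj \<omega>) (rshift ^^ m) N\<phi> K p) \<longlonglongrightarrow> A2' p" for p
    unfolding A2'_def using goodop.logv_prop[OF goodR Q(2)] goodop.psum_l2[OF goodR Q(3)]
    by (intro lconv_coord) auto
  define U where "U K p = (\<Sum>k=1..K. a^k * \<phi> (p + m * k))" for K p
  define V where "V K p = (\<Sum>k=1..K. (if m * k \<le> p then \<omega>^k * \<phi> (p - m * k) else 0))" for K p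
  have eqU: "psum \<omega> (lshift ^^ m) N\<phi> K p - of_nat p * psum \<omega> (lshift ^^ m) \<phi> K p = of_nat m * U K p" for K p
  proof -
    have "psum \<omega> (lshift ^^ m) N\<phi> K p - of_nat p * psum \<omega> (lshift ^^ m) \<phi> K p
      = (\<Sum>k=1..K. (1 / of_nat k) * a^k * (of_nat (p + m * k) * \<phi> (p + m * k))
            - of_nat p * ((1 / of_nat k) * a^k * \<phi> (p + m * k)))"
      unfolding psumL_coord N\<phi>_def numop_def a_def by (simp add: sum_subtractf sum_distrib_left)
    also have "\<dots> = (\<Sum>k=1..K. of_nat m * (a^k * \<phi> (p + m * k)))"
    proof (rule sum.cong[OF refl])
      fix k assume "k \<in> {1..K}"
      then have "(of_nat k :: complex) \<noteq> 0" by simp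
      then show "(1 / of_nat k) * a^k * (of_nat (p + m * k) * \<phi> (p + m * k))
            - of_nat p * ((1 / of_nat k) * a^k * \<phi> (p + m * k)) = of_nat m * (a^k * \<phi> (p + m * k))"
        by (simp add: field_simps)
    qed
    finally show ?thesis unfolding U_def by (simp add: sum_distrib_left)
  qed
  have eqV: "of_nat p * psum (cnj \<omega>) (rshift ^^ m) \<phi> K p - psum (cnj \<omega>) (rshift ^^ m) N\<phi> K p = of_nat m * V K p" for K p
  proof -
    have "of_nat p * psum (cnj \<omega>) (rshift ^^ m) \<phi> K p - psum (cnj \<omega>) (rshift ^^ m) N\<phi> K p
      = (\<Sum>k=1..K. of_nat p * ((1 / of_nat k) * \<omega>^k * (if m * k \<le> p then \<phi> (p - m * k) else 0))
            - (1 / of_nat k) * \<omega>^k * (if m * k \<le> p then of_nat (p - m * k) * \<phi> (p - m * k) else 0))"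
      unfolding psumR_coord N\<phi>_def numop_def bw by (simp add: sum_subtractf sum_distrib_left)
    also have "\<dots> = (\<Sum>k=1..K. of_nat m * (if m * k \<le> p then \<omega>^k * \<phi> (p - m * k) else 0))"
    proof (rule sum.cong[OF refl])
      fix k assume "k \<in> {1..K}"
      then have k0: "(of_nat k :: complex) \<noteq> 0" by simp
      show "of_nat p * ((1 / of_nat k) * \<omega>^k * (if m * k \<le> p then \<phi> (p - m * k) else 0))
            - (1 / of_nat k) * \<omega>^k * (if m * k \<le> p then of_nat (p - m * k) * \<phi> (p - m * k) else 0)
          = of_nat m * (if m * k \<le> p then \<omega>^k * \<phi> (p - m * k) else 0)"
      proof (cases "m * k \<le> p")
        case True
        then have "(of_nat (p - m * k) :: complex) = of_nat p - of_nat m * of_nat k" by (simp add: of_nat_diff)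
        then show ?thesis using True k0 by (simp add: field_simps)
      qed simp
    qed
    finally show ?thesis unfolding V_def by (simp add: sum_distrib_left)
  qed
  define u where "u p = (B2 p - of_nat p * B1 p) / of_nat m" for p
  define v where "v p = (of_nat p * A1' p - A2' p) / of_nat m" for p
  have cU: "(\<lambda>K. U K p) \<longlonglongrightarrow> u p" for p
  proof -
    have "(\<lambda>K. (psum \<omega> (lshift ^^ m) N\<phi> K p - of_nat p * psum \<omega> (lshift ^^ m) \<phi> K p) / of_nat m)
        \<longlonglongrightarrow> u p"
      unfolding u_def using m0 by (intro tendsto_intros cB1 cB2) auto
    then show ?thesis unfolding eqU using m0 by simp
  qed
  have cV: "(\<lambda>K. V K p) \<longlonglongrightarrow> v p" for p
  proof -
    have "(\<lambda>K. (of_nat p * psum (cnj \<omega>) (rshift ^^ m) \<phi> K p - psum (cnj \<omega>) (rshift ^^ m) N\<phi> K p) / of_nat m)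
        \<longlonglongrightarrow> v p"
      unfolding v_def using m0 by (intro tendsto_intros cA1 cA2) auto
    then show ?thesis unfolding eqV using m0 by simp
  qed
  define H where "H n = numop (Lmw m \<omega> \<phi>) n - Lmw m \<omega> (numop \<phi>) n" for n
  have Hf: "H p = \<i> * (u p + v p)" for p
    unfolding H_def u_def v_def numop_def Lmw_expand[OF om m1] B1_def B2_def A1'_def A2'_def N\<phi>_def
    by (rule H_alg[OF m0])
  have rU: "U (Suc K) p = a * \<phi> (p + m) + a * U K (p + m)" for K p
  proof -
    have "U (Suc K) p = a^1 * \<phi> (p + m * 1) + (\<Sum>k=1..K. a^(Suc k) * \<phi> (p + m * Suc k))"
      unfolding U_def by (rule sum_Suc_split)
    also have "(\<Sum>k=1..K. a^(Suc k) * \<phi> (p + m * Suc k)) = a * U K (p + m)"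
      unfolding U_def sum_distrib_left by (rule sum.cong[OF refl]) (simp add: algebra_simps)
    finally show ?thesis by simp
  qed
  have rV: "V (Suc K) (p + m) = \<omega> * \<phi> p + \<omega> * V K p" for K p
  proof -
    have "V (Suc K) (p + m) = (if m * 1 \<le> p + m then \<omega>^1 * \<phi> (p + m - m * 1) else 0)
       + (\<Sum>k=1..K. (if m * Suc k \<le> p + m then \<omega>^(Suc k) * \<phi> (p + m - m * Suc k) else 0))"
      unfolding V_def by (rule sum_Suc_split)
    also have "(\<Sum>k=1..K. (if m * Suc k \<le> p + m then \<omega>^(Suc k) * \<phi> (p + m - m * Suc k) else 0))
        = \<omega> * V K p"
      unfolding V_def sum_distrib_left by (rule sum.cong[OF refl]) auto
    finally show ?thesis by simp
  qed
  have ru: "u (p + m) = \<omega> * u p - \<phi> (p + m)" for p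
  proof -
    have "(\<lambda>K. U (Suc K) p) \<longlonglongrightarrow> u p" using cU by (rule LIMSEQ_Suc)
    moreover have "(\<lambda>K. U (Suc K) p) \<longlonglongrightarrow> a * \<phi> (p + m) + a * u (p + m)"
      unfolding rU by (intro tendsto_intros cU)
    ultimately have "u p = a * \<phi> (p + m) + a * u (p + m)" by (rule LIMSEQ_unique)
    then have "\<omega> * u p = (a * \<omega>) * \<phi> (p + m) + (a * \<omega>) * u (p + m)" by (simp add: algebra_simps)
    then show ?thesis using aw by simp
  qed
  have rv: "v (p + m) = \<omega> * \<phi> p + \<omega> * v p" for p
  proof -
    have "(\<lambda>K. V (Suc K) (p + m)) \<longlonglongrightarrow> v (p + m)" using cV by (rule LIMSEQ_Suc)
    moreover have "(\<lambda>K. V (Suc K) (p + m)) \<longlonglongrightarrow> \<omega> * \<phi> p + \<omega> * v p"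
      unfolding rV by (intro tendsto_intros cV)
    ultimately show ?thesis by (rule LIMSEQ_unique)
  qed
  define g where "g p = u p + v p + \<phi> p" for p
  have rg: "g (p + m) = \<omega> * g p" for p
    unfolding g_def ru rv by (simp add: algebra_simps)
  have rgj: "g (p + m * j) = \<omega>^j * g p" for p j
  proof (induction j)
    case 0 then show ?case by simp
  next
    case (Suc j)
    have "g (p + m * Suc j) = g ((p + m * j) + m)" by (simp add: algebra_simps)
    also have "\<dots> = \<omega> * g (p + m * j)" by (rule rg)
    finally show ?case using Suc by simp
  qed
  have Hl2: "H \<in> l2"
  proof -
    have "numop (Lmw m \<omega> \<phi>) \<in> l2" using A2 by (simp add: numop_dom_def)
    moreover have "Lmw m \<omega> (numop \<phi>) \<in> l2" by (rule Lmw_l2[OF om m1 A4])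
    ultimately show ?thesis unfolding H_def[abs_def] by (rule l2_diff)
  qed
  have gl2: "g \<in> l2"
  proof -
    have e: "g = (\<lambda>n. (- \<i>) * H n + \<phi> n)" unfolding g_def Hf by (simp add: fun_eq_iff algebra_simps)
    show ?thesis unfolding e by (rule l2_add[OF l2_scale[OF Hl2] P(3)])
  qed
  have g0: "g p = 0" for p
  proof -
    have "(\<lambda>n. (cmod (g n))^2) \<longlonglongrightarrow> 0"
      using gl2 unfolding l2_def by (intro summable_LIMSEQ_zero) simp
    moreover have "strict_mono (\<lambda>j. p + m * j)"
      using m1 by (intro strict_monoI) simp
    ultimately have "((\<lambda>n. (cmod (g n))^2) \<circ> (\<lambda>j. p + m * j)) \<longlonglongrightarrow> 0"
      by (rule LIMSEQ_subseq_LIMSEQ)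
    moreover have "((\<lambda>n. (cmod (g n))^2) \<circ> (\<lambda>j. p + m * j)) = (\<lambda>j. (cmod (g p))^2)"
      using om by (simp add: o_def rgj norm_mult norm_power)
    ultimately have "(cmod (g p))^2 = 0" by (simp add: LIMSEQ_const_iff)
    then show ?thesis by simp
  qed
  show ?thesis
  proof
    fix p
    have "u p + v p = - \<phi> p" using g0[of p] unfolding g_def by (simp add: add_eq_0_iff)
    then show "numop (Lmw m \<omega> \<phi>) p - Lmw m \<omega> (numop \<phi>) p = - \<i> * \<phi> p"
      using Hf[of p] unfolding H_def by simp
  qed
qed

end

definition spr :: "nat \<Rightarrow> nat \<Rightarrow> (nat \<Rightarrow> complex) \<Rightarrow> nat \<Rightarrow> complex" where
  "spr m j F p = (if j \<le> p \<and> m dvd (p - j) then F ((p - j) div m) else 0)"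

definition dl :: "nat \<Rightarrow> nat \<Rightarrow> complex" where
  "dl j p = (if p = j then 1 else 0)"

lemma dvd_equiv: assumes "(m::nat) \<ge> 1"
  shows "(m * k \<le> p \<and> p - m * k = j) \<longleftrightarrow> (j \<le> p \<and> m dvd (p - j) \<and> k = (p - j) div m)"
proof
  assume h: "m * k \<le> p \<and> p - m * k = j"
  then have "p - j = m * k" by auto
  then show "j \<le> p \<and> m dvd (p - j) \<and> k = (p - j) div m" using h assms by auto
next
  assume h: "j \<le> p \<and> m dvd (p - j) \<and> k = (p - j) div m"
  then have "p - j = m * k" by simp
  then show "m * k \<le> p \<and> p - m * k = j" using h by auto
qed

context
  fixes m :: nat
  assumes m1: "m \<ge> 1"
begin

lemma spr_at: "spr m j F (j + m * k) = F k"
  using m1 by (simp add: spr_def)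

lemma spr_sm: "strict_mono (\<lambda>k. j + m * k)"
  using m1 by (intro strict_monoI) simp

lemma spr_out: assumes "p \<notin> range (\<lambda>k. j + m * k)" shows "spr m j F p = 0"
proof (rule ccontr)
  assume "spr m j F p \<noteq> 0"
  then have jp: "j \<le> p" "m dvd (p - j)" by (auto simp: spr_def split: if_splits)
  then obtain k where "p - j = m * k" by (auto elim: dvdE)
  then have "p = j + m * k" using jp by simp
  with assms show False by auto
qed

lemma spr_l2: assumes "F \<in> l2" shows "spr m j F \<in> l2" "l2norm (spr m j F) = l2norm F"
proof -
  let ?f = "\<lambda>p. (cmod (spr m j F p))^2"
  have z: "\<And>p. p \<notin> range (\<lambda>k. j + m * k) \<Longrightarrow> ?f p = 0" using spr_out by simp
  have e: "(\<lambda>k. ?f (j + m * k)) = (\<lambda>k. (cmod (F k))^2)" by (simp add: spr_at)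
  have "summable (\<lambda>k. ?f (j + m * k))" using assms e by (simp add: l2_def)
  then show "spr m j F \<in> l2" unfolding l2_def using summable_mono_reindex[of "\<lambda>k. j + m * k" ?f, OF spr_sm[of j] z] by simp
  have "suminf (\<lambda>k. ?f (j + m * k)) = suminf ?f" by (rule suminf_mono_reindex[of "\<lambda>k. j + m * k" ?f, OF spr_sm[of j] z])
  then show "l2norm (spr m j F) = l2norm F" unfolding l2norm_def e by simp
qed

lemma spr_diff: "(\<lambda>p. spr m j F p - spr m j G p) = spr m j (\<lambda>k. F k - G k)"
  by (simp add: spr_def fun_eq_iff)

lemma spr_add: "(\<lambda>p. spr m j F p + spr m j G p) = spr m j (\<lambda>k. F k + G k)"
  by (simp add: spr_def fun_eq_iff)

lemma spr_scale: "(\<lambda>p. c * spr m j F p) = spr m j (\<lambda>k. c * F k)"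
  by (simp add: spr_def fun_eq_iff)

lemma spr_numop: "numop (spr m j F) = spr m j (\<lambda>k. of_nat (j + m * k) * F k)"
proof
  fix p
  show "numop (spr m j F) p = spr m j (\<lambda>k. of_nat (j + m * k) * F k) p"
  proof (cases "j \<le> p \<and> m dvd (p - j)")
    case True
    then obtain k where k: "p - j = m * k" by (auto elim!: dvdE)
    then have "p = j + m * k" using True by simp
    then show ?thesis by (simp add: numop_def spr_at)
  next
    case False
    then have "spr m j F p = 0" "spr m j (\<lambda>k. of_nat (j + m * k) * F k) p = 0"
      using False by (auto simp: spr_def)
    then show ?thesis by (simp add: numop_def)
  qed
qed

lemma spr_shift: "spr m (j + m) F = spr m j (\<lambda>k. if k = 0 then 0 else F (k - 1))"
proof
  fix p
  show "spr m (j + m) F p = spr m j (\<lambda>k. if k = 0 then 0 else F (k - 1)) p"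
  proof (cases "j \<le> p \<and> m dvd (p - j)")
    case True
    then obtain k where k: "p - j = m * k" by (auto elim!: dvdE)
    then have p: "p = j + m * k" using True by simp
    show ?thesis
    proof (cases k)
      case 0 then show ?thesis using p m1 by (simp add: spr_def spr_at)
    next
      case (Suc k')
      have pa: "p = (j + m) + m * k'" using p Suc by simp
      have pb: "p = j + m * Suc k'" using p Suc by simp
      have "spr m (j + m) F p = F k'" unfolding pa by (rule spr_at)
      moreover have "spr m j (\<lambda>k. if k = 0 then 0 else F (k - 1)) p = F k'"
        unfolding pb spr_at by simp
      ultimately show ?thesis by simp
    qed
  next
    case False
    have "\<not> (j + m \<le> p \<and> m dvd (p - (j + m)))"
    proof
      assume h: "j + m \<le> p \<and> m dvd (p - (j + m))"
      then have e: "p - j = (p - (j + m)) + m" by simp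
      have "m dvd (p - (j + m)) + m" using h by (intro dvd_add) auto
      then have "m dvd (p - j)" unfolding e .
      with h False show False by simp
    qed
    then show ?thesis using False by (auto simp: spr_def)
  qed
qed

end

context
  fixes \<omega> :: complex and m :: nat
  assumes om: "cmod \<omega> = 1" and m1: "m \<ge> 1"
begin

lemma L_finsupp: assumes "\<And>p. p > M \<Longrightarrow> f p = 0" "f \<in> l2"
  shows "f \<in> Log_dom w l2 (lshift ^^ m)" "logv w (lshift ^^ m) f = psum w (lshift ^^ m) f M"
    "\<And>p. p > M \<Longrightarrow> logv w (lshift ^^ m) f p = 0"
proof -
  have ev: "psum w (lshift ^^ m) f K = psum w (lshift ^^ m) f M" if "K \<ge> M" for K
  proof
    fix p
    have "(\<Sum>k=1..K. (1 / of_nat k) * (inverse w)^k * f (p + m * k))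
        = (\<Sum>k=1..M. (1 / of_nat k) * (inverse w)^k * f (p + m * k))"
    proof (rule sum.mono_neutral_right)
      show "\<forall>k\<in>{1..K} - {1..M}. (1 / of_nat k) * (inverse w)^k * f (p + m * k) = 0"
      proof
        fix k assume "k \<in> {1..K} - {1..M}"
        then have "k > M" by auto
        moreover have "k \<le> m * k" using m1 by simp
        ultimately have "p + m * k > M" by linarith
        then show "(1 / of_nat k) * (inverse w)^k * f (p + m * k) = 0" using assms by simp
      qed
    qed (use that in auto)
    then show "psum w (lshift ^^ m) f K p = psum w (lshift ^^ m) f M p"
      by (simp add: psum_def Lpow)
  qed
  have pl: "psum w (lshift ^^ m) f M \<in> l2" by (rule goodop.psum_l2[OF goodL assms(2)])
  have lc: "lconv (psum w (lshift ^^ m) f) (psum w (lshift ^^ m) f M)"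
    unfolding lconv_def
  proof (rule tendsto_eventually)
    show "\<forall>\<^sub>F K in sequentially. l2norm (\<lambda>n. psum w (lshift ^^ m) f K n - psum w (lshift ^^ m) f M n) = 0"
      unfolding eventually_sequentially
    proof (intro exI allI impI)
      fix K assume "M \<le> K"
      then have "(\<lambda>n. psum w (lshift ^^ m) f K n - psum w (lshift ^^ m) f M n) = (\<lambda>n. 0)"
        using ev[OF \<open>M \<le> K\<close>] by simp
      then show "l2norm (\<lambda>n. psum w (lshift ^^ m) f K n - psum w (lshift ^^ m) f M n) = 0"
        by (simp add: l2norm_def)
    qed
  qed
  show "f \<in> Log_dom w l2 (lshift ^^ m)"
    unfolding goodop.Log_dom_iff[OF goodL] using assms(2) pl lc by blast
  show eqv: "logv w (lshift ^^ m) f = psum w (lshift ^^ m) f M"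
    by (rule goodop.logv_eq[OF goodL assms(2) pl lc])
  fix p assume "p > M"
  have "psum w (lshift ^^ m) f M p = 0"
    unfolding psum_def Lpow using \<open>p > M\<close> assms by (intro sum.neutral) auto
  then show "logv w (lshift ^^ m) f p = 0" using eqv by simp
qed

definition Fb :: "nat \<Rightarrow> complex" where
  "Fb k = (if k = 0 then 0 else 1 / of_nat k * \<omega>^k)"

lemma Fb_sq: "(cmod (Fb k))^2 = inverse (real k ^ 2)"
  using om by (simp add: Fb_def norm_divide norm_power power_divide power_one_over inverse_eq_divide)

lemma Fb_l2: "Fb \<in> l2"
  unfolding l2_def mem_Collect_eq Fb_sq by (rule inverse_power_summable) simp

lemma dl_l2: "dl j \<in> l2"
  by (rule l2_finsupp[of "{j}"]) (auto simp: dl_def)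

lemma R_dl_psum: "psum (cnj \<omega>) (rshift ^^ m) (dl j) K = spr m j (\<lambda>k. if 1 \<le> k \<and> k \<le> K then Fb k else 0)"
proof
  fix p
  have bw: "inverse (cnj \<omega>) = \<omega>"
  proof -
    have "\<omega> * cnj \<omega> = 1" using om complex_norm_square[of \<omega>] by simp
    moreover have "cnj \<omega> \<noteq> 0" using om by auto
    ultimately show ?thesis by (simp add: field_simps inverse_eq_divide)
  qed
  have t: "(1 / of_nat k) * \<omega>^k * (if m * k \<le> p then dl j (p - m * k) else 0)
     = (if j \<le> p \<and> m dvd (p - j) \<and> k = (p - j) div m then Fb k else 0)" if "k \<ge> 1" for k
    using dvd_equiv[OF m1, of k p j] that unfolding dl_def Fb_def by auto
  have "psum (cnj \<omega>) (rshift ^^ m) (dl j) K p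
     = (\<Sum>k=1..K. (if j \<le> p \<and> m dvd (p - j) \<and> k = (p - j) div m then Fb k else 0))"
    unfolding psum_def Rpow bw by (rule sum.cong[OF refl]) (use t in auto)
  also have "\<dots> = spr m j (\<lambda>k. if 1 \<le> k \<and> k \<le> K then Fb k else 0) p"
  proof (cases "j \<le> p \<and> m dvd (p - j)")
    case True then show ?thesis by (simp add: spr_def)
  next
    case False
    then have "(if j \<le> p \<and> m dvd (p - j) \<and> k = (p - j) div m then Fb k else 0) = 0" for k by auto
    then show ?thesis using False by (auto simp: spr_def)
  qed
  finally show "psum (cnj \<omega>) (rshift ^^ m) (dl j) K p = spr m j (\<lambda>k. if 1 \<le> k \<and> k \<le> K then Fb k else 0) p" .
qed

lemma R_dl: "dl j \<in> Log_dom (cnj \<omega>) l2 (rshift ^^ m)" "logv (cnj \<omega>) (rshift ^^ m) (dl j) = spr m j Fb"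
proof -
  define P where "P K = (\<lambda>k. if 1 \<le> k \<and> k \<le> K then Fb k else 0)" for K
  have Pl2: "P K \<in> l2" for K unfolding P_def by (rule l2_finsupp[of "{..K}"]) auto
  have D: "(\<lambda>k. P K k - Fb k) = (\<lambda>k. - (if K < k then Fb k else 0))" for K
    unfolding P_def by (auto simp: Fb_def fun_eq_iff)
  have Dl2: "(\<lambda>k. P K k - Fb k) \<in> l2" for K by (rule l2_diff[OF Pl2 Fb_l2])
  have nrm: "l2norm (\<lambda>p. psum (cnj \<omega>) (rshift ^^ m) (dl j) K p - spr m j Fb p)
      = sqrt (\<Sum>i. (cmod (Fb (i + Suc K)))^2)" for K
  proof -
    have "l2norm (\<lambda>p. psum (cnj \<omega>) (rshift ^^ m) (dl j) K p - spr m j Fb p)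
        = l2norm (spr m j (\<lambda>k. P K k - Fb k))"
      unfolding R_dl_psum P_def[symmetric] spr_diff[OF m1] ..
    also have "\<dots> = l2norm (\<lambda>k. P K k - Fb k)" by (rule spr_l2(2)[OF m1 Dl2])
    also have "\<dots> = sqrt (\<Sum>k. (cmod (if K < k then Fb k else 0))^2)"
      unfolding l2norm_def D by simp
    also have "(\<Sum>k. (cmod (if K < k then Fb k else 0))^2)
        = (\<Sum>i. (cmod (if K < i + Suc K then Fb (i + Suc K) else 0))^2) + (\<Sum>i<Suc K. (cmod (if K < i then Fb i else 0))^2)"
    proof (rule suminf_split_initial_segment)
      have "(\<lambda>k. - (if K < k then Fb k else 0)) \<in> l2" using Dl2[of K] unfolding D .
      then show "summable (\<lambda>k. (cmod (if K < k then Fb k else 0))^2)" by (simp add: l2_def)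
    qed
    also have "\<dots> = (\<Sum>i. (cmod (Fb (i + Suc K)))^2)" by simp
    finally show ?thesis .
  qed
  have "(\<lambda>n. \<Sum>i. (cmod (Fb (i + n)))^2) \<longlonglongrightarrow> 0"
    using Fb_l2 unfolding l2_def by (intro suminf_exist_split2) simp
  then have "(\<lambda>K. \<Sum>i. (cmod (Fb (i + Suc K)))^2) \<longlonglongrightarrow> 0" by (rule LIMSEQ_Suc)
  then have "(\<lambda>K. sqrt (\<Sum>i. (cmod (Fb (i + Suc K)))^2)) \<longlonglongrightarrow> sqrt 0" by (rule tendsto_real_sqrt)
  then have lc: "lconv (psum (cnj \<omega>) (rshift ^^ m) (dl j)) (spr m j Fb)"
    unfolding lconv_def nrm by simp
  have sl: "spr m j Fb \<in> l2" by (rule spr_l2(1)[OF m1 Fb_l2])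
  show "dl j \<in> Log_dom (cnj \<omega>) l2 (rshift ^^ m)"
    unfolding goodop.Log_dom_iff[OF goodR] using lc sl dl_l2 by blast
  show "logv (cnj \<omega>) (rshift ^^ m) (dl j) = spr m j Fb"
    by (rule goodop.logv_eq[OF goodR dl_l2 sl lc])
qed

end

lemma numop_add: "numop (\<lambda>n. f n + g n) = (\<lambda>n. numop f n + numop g n)"
  by (simp add: numop_def fun_eq_iff algebra_simps)

lemma numop_scale: "numop (\<lambda>n. c * f n) = (\<lambda>n. c * numop f n)"
  by (simp add: numop_def fun_eq_iff algebra_simps)

lemma numop_dom_add: "f \<in> numop_dom \<Longrightarrow> g \<in> numop_dom \<Longrightarrow> (\<lambda>n. f n + g n) \<in> numop_dom"
  by (simp add: numop_dom_def numop_add l2_add)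

lemma numop_dom_scale: "f \<in> numop_dom \<Longrightarrow> (\<lambda>n. c * f n) \<in> numop_dom"
  by (simp add: numop_dom_def numop_scale l2_scale)

lemma W_bound:
  fixes a b x :: real
  assumes "a \<ge> 0" "b \<ge> 0" "x \<ge> 2"
  shows "(a + b * x) / (x * (x - 1)) \<le> 2 * (a + b) / x"
proof -
  have "(2*a+b)*2 \<le> (2*a+b)*x" using assms by (intro mult_left_mono) auto
  then have h: "a + b * x \<le> 2 * (a + b) * (x - 1)" using assms by (simp add: algebra_simps)
  have x1: "x - 1 > 0" using assms by simp
  have "(a + b * x) / (x - 1) \<le> 2 * (a + b)" using h x1 by (simp add: pos_divide_le_eq)
  then have "((a + b * x) / (x - 1)) / x \<le> (2 * (a + b)) / x" using assms by (intro divide_right_mono) auto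
  then show ?thesis by (simp add: field_simps)
qed

context
  fixes \<omega> :: complex and m :: nat
  assumes om: "cmod \<omega> = 1" and m1: "m \<ge> 1"
begin

abbreviation "CC \<equiv> prod_dom numop_dom (Lmw_dom m \<omega>) (Lmw m \<omega>) \<inter> prod_dom (Lmw_dom m \<omega>) numop_dom numop"

lemma C_iff: "\<phi> \<in> CC \<longleftrightarrow> \<phi> \<in> Lmw_dom m \<omega> \<and> Lmw m \<omega> \<phi> \<in> numop_dom \<and> \<phi> \<in> numop_dom \<and> numop \<phi> \<in> Lmw_dom m \<omega>"
  by (auto simp: prod_dom_def)

lemma C_add: assumes "f \<in> CC" "g \<in> CC" shows "(\<lambda>n. f n + g n) \<in> CC"
proof -
  have f: "f \<in> Lmw_dom m \<omega>" "Lmw m \<omega> f \<in> numop_dom" "f \<in> numop_dom" "numop f \<in> Lmw_dom m \<omega>"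
    using assms(1) C_iff by auto
  have g: "g \<in> Lmw_dom m \<omega>" "Lmw m \<omega> g \<in> numop_dom" "g \<in> numop_dom" "numop g \<in> Lmw_dom m \<omega>"
    using assms(2) C_iff by auto
  show ?thesis unfolding C_iff
    using Lmw_dom_add[OF om m1 f(1) g(1)] Lmw_dom_add[OF om m1 f(4) g(4)] numop_dom_add[OF f(2) g(2)]
      numop_dom_add[OF f(3) g(3)] numop_add by auto
qed

lemma C_scale: assumes "f \<in> CC" shows "(\<lambda>n. c * f n) \<in> CC"
proof -
  have f: "f \<in> Lmw_dom m \<omega>" "Lmw m \<omega> f \<in> numop_dom" "f \<in> numop_dom" "numop f \<in> Lmw_dom m \<omega>"
    using assms(1) C_iff by auto
  show ?thesis unfolding C_iff
    using Lmw_dom_scale[OF om m1 f(1)] Lmw_dom_scale[OF om m1 f(4)] numop_dom_scale[OF f(2)]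
      numop_dom_scale[OF f(3)] numop_scale by auto
qed

lemma C_zero: "(\<lambda>n. 0) \<in> CC"
proof -
  have z: "(\<lambda>n. 0) \<in> Lmw_dom m \<omega>" by (rule Lmw_dom_zero[OF om m1])
  have "Lmw m \<omega> (\<lambda>n. 0 * (0::complex)) = (\<lambda>n. 0 * Lmw m \<omega> (\<lambda>n. 0) n)"
    by (rule Lmw_dom_scale(2)[OF om m1 z])
  then have "Lmw m \<omega> (\<lambda>n. 0) = (\<lambda>n. 0)" by simp
  moreover have "numop (\<lambda>n. 0) = (\<lambda>n. 0)" by (simp add: numop_def)
  moreover have "(\<lambda>n. 0) \<in> numop_dom" by (simp add: numop_dom_def numop_def l2_zero)
  ultimately show ?thesis unfolding C_iff using z by simp
qed

lemma C_sum: "(\<And>i. i \<in> S \<Longrightarrow> G i \<in> CC) \<Longrightarrow> (\<lambda>p. \<Sum>i\<in>S. G i p) \<in> CC"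
proof (induction S rule: infinite_finite_induct)
  case (infinite S) then show ?case using C_zero by simp
next
  case empty then show ?case using C_zero by simp
next
  case (insert x S)
  have a: "G x \<in> CC" using insert.prems by auto
  have b: "(\<lambda>p. \<Sum>i\<in>S. G i p) \<in> CC" by (rule insert.IH) (use insert.prems in auto)
  have "(\<lambda>p. \<Sum>i\<in>insert x S. G i p) = (\<lambda>p. G x p + (\<Sum>i\<in>S. G i p))"
    by (simp only: sum.insert[OF insert.hyps])
  then show ?case using C_add[OF a b] by simp
qed

lemma C_sub_l2: "CC \<subseteq> l2"
  using dom_facts[OF om m1] C_iff by blast

lemma dl_Lmw: "dl j \<in> Lmw_dom m \<omega>"
proof -
  have z: "\<And>p. p > j \<Longrightarrow> dl j p = 0" by (simp add: dl_def)
  have "dl j \<in> Log_dom \<omega> l2 (lshift ^^ m)"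
    by (rule L_finsupp(1)[OF om m1 z dl_l2[OF om m1]])
  moreover have "dl j \<in> Log_dom (cnj \<omega>) l2 (rshift ^^ m)" by (rule R_dl(1)[OF om m1])
  ultimately show ?thesis by (simp add: Lmw_dom_def)
qed

definition Gk :: "nat \<Rightarrow> complex" where
  "Gk k = Fb \<omega> k + (- \<omega>) * (if k = 0 then 0 else Fb \<omega> (k - 1))"

lemma Gk_ge2: assumes "k \<ge> 2"
  shows "cmod (Gk k) = 1 / (real k * (real k - 1))"
proof -
  obtain k' where k': "k = Suc k'" "k' \<ge> 1" using assms by (cases k) auto
  have ok: "(of_nat k' :: complex) \<noteq> 0" "(of_nat (Suc k') :: complex) \<noteq> 0"
    using k' of_nat_neq_0[of k'] by auto
  have f1: "Fb \<omega> (Suc k') = 1 / of_nat (Suc k') * \<omega>^(Suc k')" using k' by (simp add: Fb_def[OF om m1])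
  have f2: "Fb \<omega> k' = 1 / of_nat k' * \<omega>^k'" using k' by (simp add: Fb_def[OF om m1])
  have "Gk k = Fb \<omega> (Suc k') + (- \<omega>) * Fb \<omega> k'" using k' by (simp add: Gk_def)
  also have "\<dots> = \<omega>^k * (1 / of_nat (Suc k') - 1 / of_nat k')"
    unfolding f1 f2 using k'(1) by (simp add: algebra_simps)
  finally have "Gk k = \<omega>^k * (1 / of_nat (Suc k') - 1 / of_nat k')" .
  also have "(1 / of_nat (Suc k') - 1 / of_nat k' :: complex) = of_real (- 1 / (real (Suc k') * real k'))"
    using ok by (simp add: field_simps)
  finally have gk: "Gk k = \<omega>^k * of_real (- 1 / (real (Suc k') * real k'))" .
  have "cmod (Gk k) = cmod (\<omega>^k) * \<bar>- 1 / (real (Suc k') * real k')\<bar>"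
    by (simp only: gk norm_mult norm_of_real)
  also have "\<dots> = 1 / (real (Suc k') * real k')" using om by (simp add: norm_power)
  finally show ?thesis using k' by simp
qed

lemma W_l2: "(\<lambda>k. of_nat (j + m * k) * Gk k) \<in> l2"
  unfolding l2_def mem_Collect_eq
proof (rule summable_comparison_test)
  let ?C = "(2 * (real j + real m))^2"
  show "summable (\<lambda>k. ?C * inverse (real k ^ 2))"
    by (intro summable_mult inverse_power_summable) simp
  show "\<exists>N. \<forall>k\<ge>N. norm ((cmod (of_nat (j + m * k) * Gk k))^2) \<le> ?C * inverse (real k ^ 2)"
  proof (intro exI allI impI)
    fix k :: nat assume k: "k \<ge> 2"
    have "cmod (of_nat (j + m * k) * Gk k) = real (j + m * k) * cmod (Gk k)"
      by (simp only: norm_mult norm_of_nat)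
    also have "\<dots> = (real j + real m * real k) / (real k * (real k - 1))"
      using Gk_ge2[OF k] by simp
    also have "\<dots> \<le> 2 * (real j + real m) / real k"
      by (rule W_bound) (use k in auto)
    finally have b: "cmod (of_nat (j + m * k) * Gk k) \<le> 2 * (real j + real m) / real k" .
    have "(cmod (of_nat (j + m * k) * Gk k))^2 \<le> (2 * (real j + real m) / real k)^2"
      by (rule power_mono[OF b]) simp
    also have "\<dots> = ?C * inverse (real k ^ 2)" by (simp add: power_divide inverse_eq_divide)
    finally show "norm ((cmod (of_nat (j + m * k) * Gk k))^2) \<le> ?C * inverse (real k ^ 2)" by simp
  qed
qed

definition uvec :: "nat \<Rightarrow> nat \<Rightarrow> complex" where
  "uvec j = (\<lambda>p. dl j p + (- \<omega>) * dl (j + m) p)"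

lemma uvec_C: "uvec j \<in> CC"
proof -
  have d1: "dl j \<in> Lmw_dom m \<omega>" and d2: "dl (j + m) \<in> Lmw_dom m \<omega>" by (rule dl_Lmw)+
  have uL: "uvec j \<in> Lmw_dom m \<omega>" unfolding uvec_def
    by (rule Lmw_dom_add(1)[OF om m1 d1 Lmw_dom_scale(1)[OF om m1 d2]])
  have nu: "numop (uvec j) = (\<lambda>p. of_nat j * dl j p + (- \<omega> * of_nat (j + m)) * dl (j + m) p)"
    using m1 by (auto simp: numop_def uvec_def dl_def fun_eq_iff)
  have nuL: "numop (uvec j) \<in> Lmw_dom m \<omega>" unfolding nu
    by (rule Lmw_dom_add(1)[OF om m1 Lmw_dom_scale(1)[OF om m1 d1] Lmw_dom_scale(1)[OF om m1 d2]])
  have ul2: "uvec j \<in> l2" and nul2: "numop (uvec j) \<in> l2"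
    using dom_facts(3)[OF om m1 uL] dom_facts(3)[OF om m1 nuL] by auto
  have uN: "uvec j \<in> numop_dom" using ul2 nul2 by (simp add: numop_dom_def)
  define B where "B = logv \<omega> (lshift ^^ m) (uvec j)"
  have Bz: "B p = 0" if "p > j + m" for p
    unfolding B_def using that m1 ul2
    by (intro L_finsupp(3)[OF om m1, of "j + m"]) (auto simp: uvec_def dl_def)
  have nBl2: "numop B \<in> l2"
    by (rule l2_finsupp[of "{..j + m}"]) (auto simp: numop_def Bz)
  define A where "A = logv (cnj \<omega>) (rshift ^^ m) (uvec j)"
  have r1: "dl j \<in> Log_dom (cnj \<omega>) l2 (rshift ^^ m)" "dl (j + m) \<in> Log_dom (cnj \<omega>) l2 (rshift ^^ m)"
    by (rule R_dl(1)[OF om m1])+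
  have "A = (\<lambda>p. logv (cnj \<omega>) (rshift ^^ m) (dl j) p + logv (cnj \<omega>) (rshift ^^ m) (\<lambda>n. (- \<omega>) * dl (j + m) n) p)"
    unfolding A_def uvec_def
    by (rule goodop.Log_dom_add(2)[OF goodR r1(1) goodop.Log_dom_scale(1)[OF goodR r1(2)]])
  also have "\<dots> = (\<lambda>p. spr m j (Fb \<omega>) p + (- \<omega>) * spr m (j + m) (Fb \<omega>) p)"
    unfolding goodop.Log_dom_scale(2)[OF goodR r1(2)] R_dl(2)[OF om m1] ..
  also have "\<dots> = spr m j Gk"
    unfolding spr_shift[OF m1] Gk_def
    by (simp add: spr_def fun_eq_iff)
  finally have Aeq: "A = spr m j Gk" .
  have nAl2: "numop A \<in> l2"
    unfolding Aeq spr_numop[OF m1] by (rule spr_l2(1)[OF m1 W_l2])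
  have eqN: "numop (Lmw m \<omega> (uvec j)) = (\<lambda>n. (\<i> / of_nat m * (Ln \<omega> - Ln (cnj \<omega>))) * numop (uvec j) n
      + (- (\<i> / of_nat m)) * numop B n + (\<i> / of_nat m) * numop A n)"
    unfolding Lmw_expand[OF om m1] A_def B_def by (simp add: numop_def fun_eq_iff algebra_simps)
  have "numop (Lmw m \<omega> (uvec j)) \<in> l2"
    unfolding eqN by (rule l2_add[OF l2_add[OF l2_scale[OF nul2] l2_scale[OF nBl2]] l2_scale[OF nAl2]])
  then have "Lmw m \<omega> (uvec j) \<in> numop_dom" using Lmw_l2[OF om m1 uL] by (simp add: numop_dom_def)
  then show ?thesis unfolding C_iff using uL uN nuL by simp
qed

end

lemma l2norm_zero: "l2norm (\<lambda>n. 0) = 0" by (simp add: l2norm_def)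

lemma l2norm_sum: "(\<And>i. i \<in> S \<Longrightarrow> F i \<in> l2) \<Longrightarrow>
   l2norm (\<lambda>p. \<Sum>i\<in>S. F i p) \<le> (\<Sum>i\<in>S. l2norm (F i))"
proof (induction S rule: infinite_finite_induct)
  case (infinite S) then show ?case by (simp add: l2norm_zero)
next
  case empty then show ?case by (simp add: l2norm_zero)
next
  case (insert x S)
  have a: "F x \<in> l2" using insert.prems by auto
  have IH: "l2norm (\<lambda>p. \<Sum>i\<in>S. F i p) \<le> (\<Sum>i\<in>S. l2norm (F i))"
    by (rule insert.IH) (use insert.prems in auto)
  have b: "(\<lambda>p. \<Sum>i\<in>S. F i p) \<in> l2" by (rule l2_sum) (use insert.prems in auto)
  have "(\<lambda>p. \<Sum>i\<in>insert x S. F i p) = (\<lambda>p. F x p + (\<Sum>i\<in>S. F i p))"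
    by (simp only: sum.insert[OF insert.hyps])
  then have "l2norm (\<lambda>p. \<Sum>i\<in>insert x S. F i p) \<le> l2norm (F x) + l2norm (\<lambda>p. \<Sum>i\<in>S. F i p)"
    using l2norm_triangle[OF a b] by simp
  also have "\<dots> \<le> l2norm (F x) + (\<Sum>i\<in>S. l2norm (F i))" using IH by simp
  also have "\<dots> = (\<Sum>i\<in>insert x S. l2norm (F i))" by (simp only: sum.insert[OF insert.hyps])
  finally show ?case .
qed

lemma sum_dl: "(\<Sum>j<M. c j * dl j p) = (if p < M then c p else 0)"
proof -
  have "(\<Sum>j<M. c j * dl j p) = (\<Sum>j\<in>{..<M}. if j = p then c j else 0)"
    by (rule sum.cong) (auto simp: dl_def)
  also have "\<dots> = (if p < M then c p else 0)" by simp
  finally show ?thesis .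
qed

lemma eq_equiv: assumes "(m::nat) \<ge> 1"
  shows "(p = j + m * t) \<longleftrightarrow> (j \<le> p \<and> m dvd (p - j) \<and> t = (p - j) div m)"
  using dvd_equiv[OF assms, of t p j] by auto

context
  fixes \<omega> :: complex and m :: nat
  assumes om: "cmod \<omega> = 1" and m1: "m \<ge> 1"
begin

definition vvec :: "nat \<Rightarrow> nat \<Rightarrow> nat \<Rightarrow> complex" where
  "vvec j t = (\<lambda>p. dl j p - \<omega>^t * dl (j + m * t) p)"

lemma vvec_C: "vvec j t \<in> CC \<omega> m"
proof (induction t)
  case 0
  have "vvec j 0 = (\<lambda>p. 0)" by (simp add: vvec_def)
  then show ?case using C_zero[OF om m1] by simp
next
  case (Suc t)
  have "vvec j (Suc t) = (\<lambda>p. vvec j t p + \<omega>^t * uvec \<omega> m (j + m * t) p)"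
    by (simp add: vvec_def uvec_def[OF om m1] fun_eq_iff algebra_simps)
  then show ?case using C_add[OF om m1 Suc C_scale[OF om m1 uvec_C[OF om m1]]] by simp
qed

definition rvec :: "nat \<Rightarrow> nat \<Rightarrow> nat \<Rightarrow> complex" where
  "rvec j K = (\<lambda>p. (1 / of_nat K) * (\<Sum>t=1..K. \<omega>^t * dl (j + m * t) p))"

lemma wvec_C: assumes "K \<ge> 1" shows "(\<lambda>p. dl j p - rvec j K p) \<in> CC \<omega> m"
proof -
  have "(\<lambda>p. dl j p - rvec j K p) = (\<lambda>p. (1 / of_nat K) * (\<Sum>t\<in>{1..K}. vvec j t p))"
  proof
    fix p
    have "(1 / of_nat K) * (\<Sum>t\<in>{1..K}. vvec j t p)
        = (1 / of_nat K) * (of_nat K * dl j p - (\<Sum>t=1..K. \<omega>^t * dl (j + m * t) p))"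
      by (simp add: vvec_def sum_subtractf)
    also have "\<dots> = dl j p - rvec j K p"
      using assms by (simp add: rvec_def field_simps)
    finally show "dl j p - rvec j K p = (1 / of_nat K) * (\<Sum>t\<in>{1..K}. vvec j t p)" by simp
  qed
  moreover have "(\<lambda>p. \<Sum>t\<in>{1..K}. vvec j t p) \<in> CC \<omega> m"
    by (rule C_sum[OF om m1]) (rule vvec_C)
  ultimately show ?thesis using C_scale[OF om m1, of "\<lambda>p. \<Sum>t\<in>{1..K}. vvec j t p" "1 / of_nat K"]
    by metis
qed

lemma rvec_bound: "cmod (rvec j K p) \<le> 1 / real K"
proof -
  have s: "(\<Sum>t=1..K. \<omega>^t * dl (j + m * t) p)
      = (\<Sum>t\<in>{1..K}. if t = (p - j) div m then (if j \<le> p \<and> m dvd (p - j) then \<omega>^t else 0) else 0)"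
    by (rule sum.cong[OF refl]) (auto simp: dl_def eq_equiv[OF m1])
  have "cmod (\<Sum>t=1..K. \<omega>^t * dl (j + m * t) p) \<le> 1"
    unfolding s using om by (auto simp: norm_power)
  then show ?thesis unfolding rvec_def
    by (simp add: norm_mult norm_divide divide_right_mono)
qed

lemma rvec_supp: "p \<notin> (\<lambda>t. j + m * t) ` {1..K} \<Longrightarrow> rvec j K p = 0"
  unfolding rvec_def by (intro mult_eq_0_iff[THEN iffD2] disjI2 sum.neutral) (auto simp: dl_def)

lemma rvec_l2: "rvec j K \<in> l2"
proof (rule l2_finsupp[of "(\<lambda>t. j + m * t) ` {1..K}"])
  show "finite ((\<lambda>t. j + m * t) ` {1..K})" by simp
  fix n assume "n \<notin> (\<lambda>t. j + m * t) ` {1..K}" then show "rvec j K n = 0" by (rule rvec_supp)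
qed

lemma rvec_norm: assumes "K \<ge> 1" shows "l2norm (rvec j K) \<le> 1 / sqrt (real K)"
proof -
  have "l2norm (rvec j K) \<le> sqrt (card ((\<lambda>t. j + m * t) ` {1..K})) * (1 / real K)"
  proof (rule l2norm_finsupp_bound)
    show "finite ((\<lambda>t. j + m * t) ` {1..K})" by simp
    fix n show "cmod (rvec j K n) \<le> 1 / real K" by (rule rvec_bound)
    assume "n \<notin> (\<lambda>t. j + m * t) ` {1..K}" then show "rvec j K n = 0" by (rule rvec_supp)
  qed
  also have "\<dots> \<le> sqrt (real K) * (1 / real K)"
  proof -
    have "card ((\<lambda>t. j + m * t) ` {1..K}) \<le> K" using card_image_le[of "{1..K}"] by simp
    then show ?thesis by (intro mult_right_mono) auto
  qed
  also have "\<dots> = 1 / sqrt (real K)" using assms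
    by (simp add: field_simps)
  finally show ?thesis .
qed

lemma C_dense: "l2_dense (CC \<omega> m)"
  unfolding l2_dense_def
proof (intro conjI ballI allI impI)
  show "CC \<omega> m \<subseteq> l2" by (rule C_sub_l2[OF om m1])
  fix f :: "nat \<Rightarrow> complex" and e :: real
  assume fl: "f \<in> l2" and e: "e > 0"
  have sf: "summable (\<lambda>n. (cmod (f n))^2)" using fl by (simp add: l2_def)
  obtain M where M: "\<And>n. n \<ge> M \<Longrightarrow> norm (\<Sum>i. (cmod (f (i + n)))^2) < (e/2)^2"
    using suminf_exist_split[of "(e/2)^2", OF _ sf] e by auto
  define T where "T = (\<lambda>p. if p < M then 0 else f p)"
  have Tl2: "T \<in> l2" unfolding l2_def mem_Collect_eq
    by (rule summable_comparison_test[OF _ sf]) (auto simp: T_def)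
  have "(\<Sum>p. (cmod (T p))^2) = (\<Sum>i. (cmod (T (i + M)))^2) + (\<Sum>i<M. (cmod (T i))^2)"
    by (rule suminf_split_initial_segment) (use Tl2 in \<open>simp add: l2_def\<close>)
  also have "\<dots> = (\<Sum>i. (cmod (f (i + M)))^2)" by (simp add: T_def)
  finally have Ts: "(\<Sum>p. (cmod (T p))^2) = (\<Sum>i. (cmod (f (i + M)))^2)" .
  have "(\<Sum>i. (cmod (f (i + M)))^2) < (e/2)^2" using M[of M] by simp
  then have "l2norm T < sqrt ((e/2)^2)" unfolding l2norm_def Ts by (rule real_sqrt_less_mono)
  then have Tn: "l2norm T < e / 2" using e by simp
  define S where "S = (\<Sum>j<M. cmod (f j))"
  have S0: "S \<ge> 0" unfolding S_def by (simp add: sum_nonneg)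
  obtain n :: nat where n: "(2 * S / e)^2 < real n" using reals_Archimedean2 by blast
  define K where "K = max 1 n"
  have K1: "K \<ge> 1" by (simp add: K_def)
  have "(2 * S / e)^2 < real K" using n by (simp add: K_def)
  then have "sqrt ((2 * S / e)^2) < sqrt (real K)" by (rule real_sqrt_less_mono)
  then have "2 * S / e < sqrt (real K)" using S0 e by simp
  then have "2 * S < e * sqrt (real K)" using e by (simp add: field_simps)
  then have SK: "S / sqrt (real K) < e / 2" using K1 by (simp add: field_simps)
  define g where "g = (\<lambda>p. \<Sum>j<M. f j * (dl j p - rvec j K p))"
  have gC: "g \<in> CC \<omega> m" unfolding g_def
    by (rule C_sum[OF om m1]) (rule C_scale[OF om m1 wvec_C[OF K1]])
  define R where "R = (\<lambda>p. \<Sum>j<M. f j * rvec j K p)"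
  have Rl2: "\<And>j. (\<lambda>p. f j * rvec j K p) \<in> l2" by (rule l2_scale[OF rvec_l2])
  have "l2norm R \<le> (\<Sum>j<M. l2norm (\<lambda>p. f j * rvec j K p))"
    unfolding R_def by (rule l2norm_sum[OF Rl2])
  also have "\<dots> = (\<Sum>j<M. cmod (f j) * l2norm (rvec j K))"
    by (simp add: l2norm_scale[OF rvec_l2])
  also have "\<dots> \<le> (\<Sum>j<M. cmod (f j) * (1 / sqrt (real K)))"
    by (intro sum_mono mult_left_mono rvec_norm[OF K1]) simp
  also have "\<dots> = S / sqrt (real K)" by (simp add: S_def sum_divide_distrib)
  finally have "l2norm R \<le> S / sqrt (real K)" .
  then have Rn: "l2norm R < e / 2" using SK by linarith
  have diff: "(\<lambda>n. f n - g n) = (\<lambda>n. T n + R n)"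
  proof
    fix p
    have "g p = (\<Sum>j<M. f j * dl j p) - R p"
      unfolding g_def R_def by (simp add: right_diff_distrib sum_subtractf)
    also have "(\<Sum>j<M. f j * dl j p) = (if p < M then f p else 0)" by (rule sum_dl)
    finally show "f p - g p = T p + R p" by (simp add: T_def)
  qed
  have Rl2': "R \<in> l2" unfolding R_def by (rule l2_sum[OF Rl2])
  have "l2norm (\<lambda>n. f n - g n) \<le> l2norm T + l2norm R"
    unfolding diff by (rule l2norm_triangle[OF Tl2 Rl2'])
  also have "\<dots> < e" using Tn Rn by simp
  finally show "\<exists>g\<in>CC \<omega> m. l2norm (\<lambda>n. f n - g n) < e" using gC by blast
qed

end

theorem mainTheorem18:
  fixes \<omega> :: complex and m :: nat
  assumes "cmod \<omega> = 1" and "m \<ge> 1"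
  shows "time_operator_with numop_dom numop (Lmw_dom m \<omega>) (Lmw m \<omega>)
           (prod_dom numop_dom (Lmw_dom m \<omega>) (Lmw m \<omega>) \<inter> prod_dom (Lmw_dom m \<omega>) numop_dom numop)
       \<and> l2_dense (prod_dom numop_dom (Lmw_dom m \<omega>) (Lmw m \<omega>) \<inter> prod_dom (Lmw_dom m \<omega>) numop_dom numop)"
proof -
  note om = assms(1) and m1 = assms(2)
  have dC: "l2_dense (CC \<omega> m)" by (rule C_dense[OF om m1])
  have dL: "l2_dense (Lmw_dom m \<omega>)"
    unfolding l2_dense_def
  proof (intro conjI ballI allI impI)
    show "Lmw_dom m \<omega> \<subseteq> l2" using dom_facts(3)[OF om m1] by blast
    fix f :: "nat \<Rightarrow> complex" and e :: real assume fe: "f \<in> l2" "e > 0"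
    then obtain g where "g \<in> CC \<omega> m" "l2norm (\<lambda>n. f n - g n) < e" using dC unfolding l2_dense_def by blast
    then show "\<exists>g\<in>Lmw_dom m \<omega>. l2norm (\<lambda>n. f n - g n) < e" using C_iff[OF om m1] by blast
  qed
  have sym: "symmetric_op (Lmw_dom m \<omega>) (Lmw m \<omega>)"
    unfolding symmetric_op_def using dL Lmw_l2[OF om m1] Lmw_herm[OF om m1] by blast
  have sub: "is_subspace (CC \<omega> m)"
    unfolding is_subspace_def using C_zero[OF om m1] C_add[OF om m1] C_scale[OF om m1] by blast
  have ne: "\<exists>\<phi>\<in>CC \<omega> m. \<phi> \<noteq> (\<lambda>n. 0)"
  proof
    show "uvec \<omega> m 0 \<in> CC \<omega> m" by (rule uvec_C[OF om m1])
    have "uvec \<omega> m 0 0 = 1" using m1 by (simp add: uvec_def[OF om m1] dl_def)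
    then show "uvec \<omega> m 0 \<noteq> (\<lambda>n. 0)" by auto
  qed
  have cm: "\<forall>\<phi>\<in>CC \<omega> m. (\<lambda>n. numop (Lmw m \<omega> \<phi>) n - Lmw m \<omega> (numop \<phi>) n) = (\<lambda>n. - \<i> * \<phi> n)"
    using comm[OF om m1] C_iff[OF om m1] by blast
  have ss: "CC \<omega> m \<subseteq> prod_dom numop_dom (Lmw_dom m \<omega>) (Lmw m \<omega>) \<inter> prod_dom (Lmw_dom m \<omega>) numop_dom numop"
    by (rule subset_refl)
  show ?thesis unfolding time_operator_with_def using sym sub ne cm dC ss by blast
qed

end
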